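(* Let $G=(V,E)$ be a finite connected graph, $G'=(V',E')$ a connected subgraph, $F\subset E$, $q\ge1$, $p\in(0,1)$, and $\lambda_1,\lambda_2\in\{1,q\}^E$ with $\lambda_1\le\lambda_2$. Then $$\mathbb P^{G'}\preceq\mathbb P^{G,E',\lambda_1},\qquad\mathbb P^{G,E',\lambda_1}\preceq\mathbb P^{G,E',\lambda_2},\qquad\mathbb P^{G,E\setminus F,\lambda_2}\preceq\mathbb P^{G/F}.$$ More generally, for $\lambda\in\{1,q\}^E$: if $E''\subset E'$ then $\mathbb P^{G',E'',\lambda_{E'}}\preceq\mathbb P^{G,E'',\lambda}$, and if $E''\subset E$ with $E''\cap F=\emptyset$ then $\mathbb P^{G,E'',\lambda}\preceq\mathbb P^{G/F,E'',\lambda_{E\setminus F}}$.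
   Context: For a finite connected (multi)graph $H$ with conductances $c$, $\Delta^H_c f(x)=\sum_{e=\{x,y\}}c_e(f(x)-f(y))$ acts on zero-sum functions on $\mathbf V(H)$; $\det\Delta^H_c$ is its determinant. For $\kappa$ and a set $E'$ of edges, $h(\kappa)$ and $s(\kappa)$ count the edges (in the domain of $\kappa$) with $\kappa_e=q$ resp. $\kappa_e=1$. $\mathbb P^{H}=\mathbb P^{H,p}$ is the measure on $\{1,q\}^{\mathbf E(H)}$ with $\mathbb P^H(\kappa)\propto p^{h(\kappa)}(1-p)^{s(\kappa)}(\det\Delta^H_\kappa)^{-1/2}$. For $E''\subset\mathbf E(H)$ and $\lambda\in\{1,q\}^{\mathbf E(H)}$, the measure with boundary condition is $\mathbb P^{H,E'',\lambda}(\kappa)\propto p^{h(\kappa)}(1-p)^{s(\kappa)}(\det\Delta^H_{(\lambda,\kappa)})^{-1/2}$ on $\kappa\in\{1,q\}^{E''}$, where $(\lambda,\kappa)$ equals $\kappa$ on $E''$ and $\lambda$ on $\mathbf E(H)\setminus E''$. $G/F$ is the multigraph obtained from $G$ by identifying the endpoints of each edge of $F$; its edges are identified with $E\setminus F$. $\mu_1\preceq\mu_2$ means $\mu_1(A)\le\mu_2(A)$ for every increasing event $A$ (coordinatewise order, $1<q$). *)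

theory Defs
  imports "HOL-Analysis.Analysis"
begin

text \<open>Multigraphs: a vertex set V, an edge set E and an endpoint map ends
  (an edge e joins fst (ends e) and snd (ends e); orientation is irrelevant).\<close>

definition adj :: "'e set \<Rightarrow> ('e \<Rightarrow> 'v \<times> 'v) \<Rightarrow> 'v \<Rightarrow> 'v \<Rightarrow> bool" where
  "adj E ends x y \<longleftrightarrow> (\<exists>e\<in>E. ends e = (x, y) \<or> ends e = (y, x))"

definition multigraph :: "'v set \<Rightarrow> 'e set \<Rightarrow> ('e \<Rightarrow> 'v \<times> 'v) \<Rightarrow> bool" where
  "multigraph V E ends \<longleftrightarrow> finite V \<and> finite E \<and>
     (\<forall>e\<in>E. fst (ends e) \<in> V \<and> snd (ends e) \<in> V)"

definition connected_mg :: "'v set \<Rightarrow> 'e set \<Rightarrow> ('e \<Rightarrow> 'v \<times> 'v) \<Rightarrow> bool" where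
  "connected_mg V E ends \<longleftrightarrow> multigraph V E ends \<and> V \<noteq> {} \<and>
     (\<forall>x\<in>V. \<forall>y\<in>V. (adj E ends)\<^sup>*\<^sup>* x y)"

definition simple_graph :: "'v set \<Rightarrow> 'e set \<Rightarrow> ('e \<Rightarrow> 'v \<times> 'v) \<Rightarrow> bool" where
  "simple_graph V E ends \<longleftrightarrow> multigraph V E ends \<and>
     (\<forall>e\<in>E. fst (ends e) \<noteq> snd (ends e)) \<and>
     (\<forall>e\<in>E. \<forall>e'\<in>E. (ends e' = ends e \<or> ends e' = prod.swap (ends e)) \<longrightarrow> e = e')"

definition subgraph ::
  "'v set \<Rightarrow> 'e set \<Rightarrow> 'v set \<Rightarrow> 'e set \<Rightarrow> ('e \<Rightarrow> 'v \<times> 'v) \<Rightarrow> bool" where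
  "subgraph V' E' V E ends \<longleftrightarrow> V' \<subseteq> V \<and> E' \<subseteq> E \<and>
     (\<forall>e\<in>E'. fst (ends e) \<in> V' \<and> snd (ends e) \<in> V')"

definition contr_class :: "'v set \<Rightarrow> 'e set \<Rightarrow> ('e \<Rightarrow> 'v \<times> 'v) \<Rightarrow> 'v \<Rightarrow> 'v set" where
  "contr_class V F ends x = {y\<in>V. (adj F ends)\<^sup>*\<^sup>* x y}"

definition contr_V :: "'v set \<Rightarrow> 'e set \<Rightarrow> ('e \<Rightarrow> 'v \<times> 'v) \<Rightarrow> 'v set set" where
  "contr_V V F ends = contr_class V F ends ` V"

definition contr_E :: "'e set \<Rightarrow> 'e set \<Rightarrow> 'e set" where
  "contr_E E F = E - F"

definition contr_ends :: "'v set \<Rightarrow> 'e set \<Rightarrow> ('e \<Rightarrow> 'v \<times> 'v) \<Rightarrow> 'e \<Rightarrow> 'v set \<times> 'v set" where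
  "contr_ends V F ends e =
     (contr_class V F ends (fst (ends e)), contr_class V F ends (snd (ends e)))"

definition laplacian ::
  "'e set \<Rightarrow> ('e \<Rightarrow> 'v \<times> 'v) \<Rightarrow> ('e \<Rightarrow> real) \<Rightarrow> ('v \<Rightarrow> real) \<Rightarrow> 'v \<Rightarrow> real" where
  "laplacian E ends c f x =
     (\<Sum>e\<in>E. c e * ((if fst (ends e) = x then f x - f (snd (ends e)) else 0)
                   + (if snd (ends e) = x then f x - f (fst (ends e)) else 0)))"

definition det_on :: "'v set \<Rightarrow> ('v \<Rightarrow> 'v \<Rightarrow> real) \<Rightarrow> real" where
  "det_on V M = (\<Sum>p\<in>{p. p permutes V}. of_int (sign p) * (\<Prod>x\<in>V. M x (p x)))"

text \<open>Determinant of the Laplacian acting on the zero-sum functions on V.  The Laplacian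
  maps zero-sum functions to zero-sum functions and kills constants; its restriction to
  the zero-sum subspace is extended by the identity on the complementary line of constants
  (the orthogonal projection (1/|V|) J onto constants is added), which does not change the
  determinant.\<close>
definition det_lap ::
  "'v set \<Rightarrow> 'e set \<Rightarrow> ('e \<Rightarrow> 'v \<times> 'v) \<Rightarrow> ('e \<Rightarrow> real) \<Rightarrow> real" where
  "det_lap V E ends c = det_on V (\<lambda>x y.
      laplacian E ends c (\<lambda>z. if z = y then 1 else 0) x + 1 / real (card V))"

text \<open>Configurations in {1,q}^D are encoded as boolean functions (True = q, False = 1),
  extended by False outside the domain D.\<close>
definition cfgs :: "'e set \<Rightarrow> ('e \<Rightarrow> bool) set" where
  "cfgs D = {\<omega>. \<forall>e. e \<notin> D \<longrightarrow> \<not> \<omega> e}"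

definition cond :: "real \<Rightarrow> bool \<Rightarrow> real" where
  "cond q b = (if b then q else 1)"

definition hcount :: "'e set \<Rightarrow> ('e \<Rightarrow> bool) \<Rightarrow> nat" where
  "hcount D \<omega> = card {e\<in>D. \<omega> e}"

definition scount :: "'e set \<Rightarrow> ('e \<Rightarrow> bool) \<Rightarrow> nat" where
  "scount D \<omega> = card {e\<in>D. \<not> \<omega> e}"

definition glue :: "'e set \<Rightarrow> ('e \<Rightarrow> bool) \<Rightarrow> ('e \<Rightarrow> bool) \<Rightarrow> 'e \<Rightarrow> bool" where
  "glue D bc \<kappa> e = (if e \<in> D then \<kappa> e else bc e)"

definition weight ::
  "real \<Rightarrow> real \<Rightarrow> 'v set \<Rightarrow> 'e set \<Rightarrow> ('e \<Rightarrow> 'v \<times> 'v) \<Rightarrow> 'e set \<Rightarrow> ('e \<Rightarrow> bool)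
   \<Rightarrow> ('e \<Rightarrow> bool) \<Rightarrow> real" where
  "weight p q V E ends D bc \<kappa> =
     p ^ hcount D \<kappa> * (1 - p) ^ scount D \<kappa> *
     (det_lap V E ends (\<lambda>e. cond q (glue D bc \<kappa> e))) powr (-1/2)"

text \<open>The measure P^{H,D,\<lambda>} on {1,q}^D, given as a function on events A \<subseteq> cfgs D.\<close>
definition Pbc ::
  "real \<Rightarrow> real \<Rightarrow> 'v set \<Rightarrow> 'e set \<Rightarrow> ('e \<Rightarrow> 'v \<times> 'v) \<Rightarrow> 'e set \<Rightarrow> ('e \<Rightarrow> bool)
   \<Rightarrow> ('e \<Rightarrow> bool) set \<Rightarrow> real" where
  "Pbc p q V E ends D bc A =
     (\<Sum>\<kappa>\<in>A \<inter> cfgs D. weight p q V E ends D bc \<kappa>) /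
     (\<Sum>\<kappa>\<in>cfgs D. weight p q V E ends D bc \<kappa>)"

text \<open>P^H = P^{H,E(H),\<lambda>} (the boundary condition is irrelevant).\<close>
definition Pfree ::
  "real \<Rightarrow> real \<Rightarrow> 'v set \<Rightarrow> 'e set \<Rightarrow> ('e \<Rightarrow> 'v \<times> 'v) \<Rightarrow> ('e \<Rightarrow> bool) set \<Rightarrow> real" where
  "Pfree p q V E ends = Pbc p q V E ends E (\<lambda>_. False)"

definition increasing_event :: "'e set \<Rightarrow> ('e \<Rightarrow> bool) set \<Rightarrow> bool" where
  "increasing_event D A \<longleftrightarrow> A \<subseteq> cfgs D \<and>
     (\<forall>\<omega>\<in>A. \<forall>\<omega>'\<in>cfgs D. (\<forall>e. \<omega> e \<longrightarrow> \<omega>' e) \<longrightarrow> \<omega>' \<in> A)"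

definition dominated :: "'e set \<Rightarrow> (('e \<Rightarrow> bool) set \<Rightarrow> real) \<Rightarrow> (('e \<Rightarrow> bool) set \<Rightarrow> real) \<Rightarrow> bool" where
  "dominated D \<mu>1 \<mu>2 \<longleftrightarrow> (\<forall>A. increasing_event D A \<longrightarrow> \<mu>1 A \<le> \<mu>2 A)"

end

theory Submission
  imports Defs
begin


lemma det_on_cong:
  assumes "\<And>x y. x \<in> V \<Longrightarrow> y \<in> V \<Longrightarrow> M x y = N x y"
  shows "det_on V M = det_on V N"
  unfolding det_on_def
  by (intro sum.cong refl arg_cong2[where f="(*)"] prod.cong)
     (auto simp: assms permutes_in_image)

lemma prod_if_split:
  assumes "finite V" "a \<in> V"
  shows "(\<Prod>x\<in>V. (if x = a then f x else g x)) = f a * (\<Prod>x\<in>V-{a}. g x)"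
proof -
  have "(\<Prod>x\<in>V. (if x = a then f x else g x)) = f a * (\<Prod>x\<in>V-{a}. (if x = a then f x else g x))"
    using assms by (subst prod.remove[of V a]) auto
  also have "(\<Prod>x\<in>V-{a}. (if x = a then f x else g x)) = (\<Prod>x\<in>V-{a}. g x)"
    by (intro prod.cong) auto
  finally show ?thesis .
qed

lemma det_on_row:
  assumes "finite V" "a \<in> V"
  shows "det_on V (\<lambda>x y. if x = a then r y else M x y) =
    (\<Sum>p\<in>{p. p permutes V}. of_int (sign p) * r (p a) * (\<Prod>x\<in>V-{a}. M x (p x)))"
  unfolding det_on_def
  by (intro sum.cong refl) (simp add: prod_if_split[OF assms] mult.assoc)

lemma det_on_row_sum:
  assumes "finite V" "a \<in> V" "finite Z"
  shows "det_on V (\<lambda>x y. if x = a then (\<Sum>z\<in>Z. c z * R z y) else M x y) =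
    (\<Sum>z\<in>Z. c z * det_on V (\<lambda>x y. if x = a then R z y else M x y))"
proof -
  have "det_on V (\<lambda>x y. if x = a then (\<Sum>z\<in>Z. c z * R z y) else M x y) =
    (\<Sum>p\<in>{p. p permutes V}. \<Sum>z\<in>Z. c z * (of_int (sign p) * R z (p a) * (\<Prod>x\<in>V-{a}. M x (p x))))"
    unfolding det_on_row[OF assms(1,2)]
    by (intro sum.cong refl) (simp add: sum_distrib_left sum_distrib_right mult_ac)
  also have "\<dots> = (\<Sum>z\<in>Z. \<Sum>p\<in>{p. p permutes V}. c z * (of_int (sign p) * R z (p a) * (\<Prod>x\<in>V-{a}. M x (p x))))"
    by (rule sum.swap)
  also have "\<dots> = (\<Sum>z\<in>Z. c z * det_on V (\<lambda>x y. if x = a then R z y else M x y))"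
    unfolding det_on_row[OF assms(1,2)] by (simp add: sum_distrib_left)
  finally show ?thesis .
qed

lemma det_on_row_add:
  assumes "finite V" "a \<in> V"
  shows "det_on V (\<lambda>x y. if x = a then r1 y + k * r2 y else M x y) =
    det_on V (\<lambda>x y. if x = a then r1 y else M x y) + k * det_on V (\<lambda>x y. if x = a then r2 y else M x y)"
  unfolding det_on_row[OF assms(1,2)]
  by (simp add: sum_distrib_left algebra_simps sum.distrib)

lemma det_on_identical_rows:
  assumes V: "finite V" and ab: "a \<in> V" "b \<in> V" "a \<noteq> b" and r: "\<And>y. y \<in> V \<Longrightarrow> M a y = M b y"
  shows "det_on V M = 0"
proof -
  define \<tau> where "\<tau> = Transposition.transpose a b"
  have tperm: "\<tau> permutes V" unfolding \<tau>_def using ab by (simp add: permutes_swap_id)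
  have tt: "\<tau> \<circ> \<tau> = id" unfolding \<tau>_def by simp
  have stau: "sign \<tau> = -1" unfolding \<tau>_def using ab by (simp add: sign_swap_id)
  let ?P = "{p. p permutes V}"
  let ?g = "\<lambda>p. of_int (sign p) * (\<Prod>x\<in>V. M x (p x))"
  have "det_on V M = sum ?g ?P" unfolding det_on_def by simp
  also have "\<dots> = sum (\<lambda>p. ?g (p \<circ> \<tau>)) ?P"
  proof (rule sum.reindex_bij_witness[where i="\<lambda>p. p \<circ> \<tau>" and j="\<lambda>p. p \<circ> \<tau>"])
    fix p assume "p \<in> ?P"
    show "p \<circ> \<tau> \<circ> \<tau> = p" using tt by (simp add: comp_assoc)
    show "p \<circ> \<tau> \<in> ?P" using \<open>p \<in> ?P\<close> tperm by (auto intro: permutes_compose)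
  qed (use tt tperm in \<open>auto simp: comp_assoc intro: permutes_compose\<close>)
  also have "\<dots> = sum (\<lambda>p. - ?g p) ?P"
  proof (rule sum.cong[OF refl])
    fix p assume p: "p \<in> ?P"
    hence pp: "p permutes V" by simp
    have "sign (p \<circ> \<tau>) = - sign p"
      using sign_compose[OF permutes_imp_permutation[OF V pp] permutes_imp_permutation[OF V tperm]] stau
      by simp
    moreover have "(\<Prod>x\<in>V. M x ((p \<circ> \<tau>) x)) = (\<Prod>x\<in>V. M x (p x))"
    proof -
      have "(\<Prod>x\<in>V. M x ((p \<circ> \<tau>) x)) = (\<Prod>x\<in>V. (\<lambda>z. M (\<tau> z) (p z)) (\<tau> x))"
        by (intro prod.cong) (use tt in \<open>auto simp: fun_eq_iff\<close>)
      also have "\<dots> = (\<Prod>x\<in>V. M (\<tau> x) (p x))"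
        by (rule prod.reindex_bij_betw[OF permutes_imp_bij[OF tperm]])
      also have "\<dots> = (\<Prod>x\<in>V. M x (p x))"
      proof (intro prod.cong refl)
        fix x assume x: "x \<in> V"
        have px: "p x \<in> V" using x pp by (simp add: permutes_in_image)
        show "M (\<tau> x) (p x) = M x (p x)"
          using r[OF px] unfolding \<tau>_def by (auto simp: Transposition.transpose_def)
      qed
      finally show ?thesis .
    qed
    ultimately show "?g (p \<circ> \<tau>) = - ?g p" by simp
  qed
  also have "\<dots> = - det_on V M" unfolding det_on_def by (simp add: sum_negf)
  finally show ?thesis by simp
qed

definition cof :: "'v set \<Rightarrow> ('v \<Rightarrow> 'v \<Rightarrow> real) \<Rightarrow> 'v \<Rightarrow> 'v \<Rightarrow> real" where
  "cof V M y x = det_on V (\<lambda>w z. if w = y then (if z = x then 1 else 0) else M w z)"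

lemma cof_prop:
  assumes V: "finite V" and w: "w \<in> V" and y: "y \<in> V"
  shows "(\<Sum>x\<in>V. M w x * cof V M y x) = (if w = y then det_on V M else 0)"
proof -
  have "(\<Sum>x\<in>V. M w x * cof V M y x) =
      det_on V (\<lambda>w' z. if w' = y then (\<Sum>x\<in>V. M w x * (if z = x then 1 else 0)) else M w' z)"
    unfolding cof_def by (rule det_on_row_sum[symmetric]) (use V y in auto)
  also have "\<dots> = det_on V (\<lambda>w' z. if w' = y then M w z else M w' z)"
  proof (rule det_on_cong)
    fix x z assume "x \<in> V" "z \<in> V"
    have "(\<Sum>x\<in>V. M w x * (if z = x then 1 else 0)) = (\<Sum>x\<in>V. (if z = x then M w x else 0))"
      by (intro sum.cong) auto
    also have "\<dots> = M w z" using \<open>z \<in> V\<close> V by simp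
    finally show "(if x = y then (\<Sum>x\<in>V. M w x * (if z = x then 1 else 0)) else M x z) =
         (if x = y then M w z else M x z)" by simp
  qed
  also have "\<dots> = (if w = y then det_on V M else 0)"
  proof (cases "w = y")
    case True
    have "det_on V (\<lambda>w' z. if w' = y then M w z else M w' z) = det_on V M"
      by (rule det_on_cong) (auto simp: True)
    then show ?thesis using True by simp
  next
    case False
    have "det_on V (\<lambda>w' z. if w' = y then M w z else M w' z) = 0"
      by (rule det_on_identical_rows[of V y w]) (use V w y False in auto)
    then show ?thesis using False by simp
  qed
  finally show ?thesis .
qed

lemma det_on_solve:
  assumes V: "finite V" and d: "det_on V M \<noteq> 0"
  shows "\<exists>u. \<forall>w\<in>V. (\<Sum>x\<in>V. M w x * u x) = b w"
proof -
  define u where "u x = (\<Sum>y\<in>V. cof V M y x * b y) / det_on V M" for x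
  have "(\<Sum>x\<in>V. M w x * u x) = b w" if w: "w \<in> V" for w
  proof -
    have "(\<Sum>x\<in>V. M w x * u x) = (\<Sum>x\<in>V. \<Sum>y\<in>V. b y * (M w x * cof V M y x)) / det_on V M"
      unfolding u_def by (simp add: sum_divide_distrib sum_distrib_left mult_ac)
    also have "(\<Sum>x\<in>V. \<Sum>y\<in>V. b y * (M w x * cof V M y x)) = (\<Sum>y\<in>V. \<Sum>x\<in>V. b y * (M w x * cof V M y x))"
      by (rule sum.swap)
    also have "\<dots> = (\<Sum>y\<in>V. b y * (\<Sum>x\<in>V. M w x * cof V M y x))"
      by (simp add: sum_distrib_left)
    also have "\<dots> = (\<Sum>y\<in>V. b y * (if w = y then det_on V M else 0))"
      using cof_prop[OF V w] by simp
    also have "\<dots> = (\<Sum>y\<in>V. (if w = y then b y * det_on V M else 0))"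
      by (intro sum.cong) auto
    also have "\<dots> = b w * det_on V M" using w V by simp
    finally show ?thesis using d by simp
  qed
  thus ?thesis by blast
qed



lemma det_on_cramer_row:
  assumes V: "finite V" and a: "a \<in> V" and sym: "\<And>x y. x \<in> V \<Longrightarrow> y \<in> V \<Longrightarrow> M x y = M y x"
    and sol: "\<And>w. w \<in> V \<Longrightarrow> (\<Sum>x\<in>V. M w x * u x) = b w"
  shows "det_on V (\<lambda>x y. if x = a then b y else M x y) = u a * det_on V M"
proof -
  have "det_on V (\<lambda>x y. if x = a then b y else M x y) =
        det_on V (\<lambda>x y. if x = a then (\<Sum>z\<in>V. u z * M z y) else M x y)"
  proof (rule det_on_cong)
    fix x y assume "x \<in> V" "y \<in> V"
    have "b y = (\<Sum>z\<in>V. u z * M z y)"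
      using sol[OF \<open>y \<in> V\<close>] sym[OF \<open>y \<in> V\<close>] by (auto simp: mult.commute intro!: sum.cong)
    thus "(if x = a then b y else M x y) = (if x = a then (\<Sum>z\<in>V. u z * M z y) else M x y)" by simp
  qed
  also have "\<dots> = (\<Sum>z\<in>V. u z * det_on V (\<lambda>x y. if x = a then M z y else M x y))"
    by (rule det_on_row_sum) (use V a in auto)
  also have "\<dots> = (\<Sum>z\<in>V. (if z = a then u a * det_on V M else 0))"
  proof (intro sum.cong refl)
    fix z assume z: "z \<in> V"
    show "u z * det_on V (\<lambda>x y. if x = a then M z y else M x y) = (if z = a then u a * det_on V M else 0)"
    proof (cases "z = a")
      case True
      have "det_on V (\<lambda>x y. if x = a then M z y else M x y) = det_on V M"
        by (rule det_on_cong) (auto simp: True)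
      then show ?thesis using True by simp
    next
      case False
      have "det_on V (\<lambda>x y. if x = a then M z y else M x y) = 0"
        by (rule det_on_identical_rows[of V a z]) (use V a z False in auto)
      then show ?thesis using False by simp
    qed
  qed
  also have "\<dots> = u a * det_on V M" using a V by simp
  finally show ?thesis .
qed

definition bvec :: "'v \<Rightarrow> 'v \<Rightarrow> 'v \<Rightarrow> real" where
  "bvec a b x = (if x = a then 1 else 0) - (if x = b then 1 else 0)"

lemma det_on_rank_one:
  assumes V: "finite V" and a: "a \<in> V" and b: "b \<in> V"
    and sym: "\<And>x y. x \<in> V \<Longrightarrow> y \<in> V \<Longrightarrow> M x y = M y x"
    and sol: "\<And>w. w \<in> V \<Longrightarrow> (\<Sum>x\<in>V. M w x * u x) = bvec a b w"
  shows "det_on V (\<lambda>x y. M x y + t * bvec a b x * bvec a b y) = det_on V M * (1 + t * (u a - u b))"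
proof (cases "a = b")
  case True
  then show ?thesis by (simp add: bvec_def)
next
  case ab: False
  define \<beta> where "\<beta> = bvec a b"
  have \<beta>a: "\<beta> a = 1" and \<beta>b: "\<beta> b = -1" using ab by (auto simp: \<beta>_def bvec_def)
  have \<beta>o: "\<beta> x = 0" if "x \<noteq> a" "x \<noteq> b" for x using that by (auto simp: \<beta>_def bvec_def)
  define N1 where "N1 = (\<lambda>x y. if x = b then M b y + (-t) * \<beta> y else M x y)"
  define N2 where "N2 = (\<lambda>x y. if x = a then \<beta> y else M x y)"
  have cr: "det_on V (\<lambda>x y. if x = c then \<beta> y else M x y) = u c * det_on V M" if "c \<in> V" for c
    unfolding \<beta>_def by (rule det_on_cramer_row[OF V that sym sol])
  have "(\<lambda>x y. M x y + t * \<beta> x * \<beta> y) = (\<lambda>x y. if x = a then M a y + t * \<beta> y else N1 x y)"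
    using ab \<beta>a \<beta>b \<beta>o by (auto simp: N1_def fun_eq_iff)
  hence "det_on V (\<lambda>x y. M x y + t * \<beta> x * \<beta> y) =
     det_on V (\<lambda>x y. if x = a then M a y else N1 x y) + t * det_on V (\<lambda>x y. if x = a then \<beta> y else N1 x y)"
    using det_on_row_add[OF V a] by simp
  also have "det_on V (\<lambda>x y. if x = a then M a y else N1 x y) = det_on V N1"
    by (rule det_on_cong) (use ab in \<open>auto simp: N1_def\<close>)
  also have "det_on V N1 = det_on V (\<lambda>x y. if x = b then M b y else M x y) + (-t) * det_on V (\<lambda>x y. if x = b then \<beta> y else M x y)"
    unfolding N1_def by (rule det_on_row_add[OF V b])
  also have "det_on V (\<lambda>x y. if x = b then M b y else M x y) = det_on V M"
    by (rule det_on_cong) auto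
  also have "(\<lambda>x y. if x = a then \<beta> y else N1 x y) = (\<lambda>x y. if x = b then M b y + (-t) * \<beta> y else N2 x y)"
    using ab by (auto simp: N1_def N2_def fun_eq_iff)
  also have "det_on V \<dots> = det_on V (\<lambda>x y. if x = b then M b y else N2 x y) + (-t) * det_on V (\<lambda>x y. if x = b then \<beta> y else N2 x y)"
    by (rule det_on_row_add[OF V b])
  also have "det_on V (\<lambda>x y. if x = b then M b y else N2 x y) = det_on V N2"
    by (rule det_on_cong) (use ab in \<open>auto simp: N2_def\<close>)
  also have "det_on V (\<lambda>x y. if x = b then \<beta> y else N2 x y) = 0"
    by (rule det_on_identical_rows[of V a b]) (use V a b ab in \<open>auto simp: N2_def\<close>)
  also have "det_on V N2 = u a * det_on V M" unfolding N2_def by (rule cr[OF a])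
  also have "det_on V (\<lambda>x y. if x = b then \<beta> y else M x y) = u b * det_on V M" by (rule cr[OF b])
  finally show ?thesis unfolding \<beta>_def by (simp add: algebra_simps)
qed



lemma det_on_empty: "det_on {} M = 1"
  unfolding det_on_def by simp

lemma det_on_rowops:
  assumes V: "finite V" and a: "a \<in> V" and S: "finite S" "S \<subseteq> V" "a \<notin> S"
  shows "det_on V (\<lambda>x y. if x \<in> S then M x y - k x * M a y else M x y) = det_on V M"
  using S
proof (induction S rule: finite_induct)
  case empty
  then show ?case by simp
next
  case (insert s S)
  define P where "P = (\<lambda>x y. if x \<in> S then M x y - k x * M a y else M x y)"
  have s: "s \<in> V" "s \<noteq> a" using insert by auto
  have "(\<lambda>x y. if x \<in> insert s S then M x y - k x * M a y else M x y) =
        (\<lambda>x y. if x = s then M s y + (- k s) * M a y else P x y)"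
    using insert by (auto simp: P_def fun_eq_iff)
  hence "det_on V (\<lambda>x y. if x \<in> insert s S then M x y - k x * M a y else M x y) =
     det_on V (\<lambda>x y. if x = s then M s y else P x y) + (- k s) * det_on V (\<lambda>x y. if x = s then M a y else P x y)"
    using det_on_row_add[OF V s(1)] by simp
  also have "det_on V (\<lambda>x y. if x = s then M s y else P x y) = det_on V P"
    by (rule det_on_cong) (use insert in \<open>auto simp: P_def\<close>)
  also have "det_on V (\<lambda>x y. if x = s then M a y else P x y) = 0"
    by (rule det_on_identical_rows[of V s a]) (use insert s a V in \<open>auto simp: P_def\<close>)
  also have "det_on V P = det_on V M" unfolding P_def using insert by simp
  finally show ?case by simp
qed

lemma permutes_insert_fix:
  assumes "p permutes insert a V0" "p a = a"
  shows "p permutes V0"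
proof -
  have "\<forall>x. x \<notin> V0 \<longrightarrow> p x = x" using assms(2) assms(1)[unfolded permutes_def] by (metis insert_iff)
  thus ?thesis using assms(1) unfolding permutes_def by blast
qed

lemma det_on_col_expand:
  assumes V0: "finite V0" and a: "a \<notin> V0" and z: "\<And>x. x \<in> V0 \<Longrightarrow> N x a = 0"
  shows "det_on (insert a V0) N = N a a * det_on V0 N"
proof -
  let ?T = "{p. p permutes insert a V0}" and ?S = "{p. p permutes V0}"
  let ?g = "\<lambda>p. of_int (sign p) * (\<Prod>x\<in>insert a V0. N x (p x))"
  have fin: "finite ?T" using V0 by (intro finite_permutations) simp
  have sub: "?S \<subseteq> ?T" by (auto intro: permutes_subset)
  have zero: "?g p = 0" if "p \<in> ?T - ?S" for p
  proof -
    from that have pT: "p permutes insert a V0" and pS: "\<not> p permutes V0" by auto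
    have pa: "p a \<noteq> a" using permutes_insert_fix[OF pT] pS by blast
    define x where "x = inv p a"
    have px: "p x = a" unfolding x_def using permutes_inverses(1)[OF pT] by simp
    have xin: "x \<in> insert a V0" unfolding x_def using permutes_in_image[OF permutes_inv[OF pT]] by simp
    have "x \<noteq> a" using px pa by auto
    hence "x \<in> V0" using xin by simp
    hence "N x (p x) = 0" using px z by simp
    hence "(\<Prod>x\<in>insert a V0. N x (p x)) = 0"
      using \<open>x \<in> V0\<close> V0 by (intro prod_zero) auto
    thus ?thesis by simp
  qed
  have "det_on (insert a V0) N = sum ?g ?T" unfolding det_on_def by simp
  also have "\<dots> = sum ?g ?S" by (rule sum.mono_neutral_right[OF fin sub]) (use zero in blast)
  also have "\<dots> = (\<Sum>p\<in>?S. N a a * (of_int (sign p) * (\<Prod>x\<in>V0. N x (p x))))"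
  proof (intro sum.cong refl)
    fix p assume "p \<in> ?S"
    hence "p a = a" using a by (simp add: permutes_not_in)
    thus "?g p = N a a * (of_int (sign p) * (\<Prod>x\<in>V0. N x (p x)))"
      using V0 a by (simp add: prod.insert)
  qed
  also have "\<dots> = N a a * det_on V0 N" unfolding det_on_def by (simp add: sum_distrib_left)
  finally show ?thesis .
qed

definition qform :: "'v set \<Rightarrow> ('v \<Rightarrow> 'v \<Rightarrow> real) \<Rightarrow> ('v \<Rightarrow> real) \<Rightarrow> real" where
  "qform V M v = (\<Sum>x\<in>V. \<Sum>y\<in>V. v x * M x y * v y)"

lemma qform_insert:
  assumes "finite V0" "a \<notin> V0"
  shows "qform (insert a V0) M w = w a * M a a * w a + (\<Sum>y\<in>V0. w a * M a y * w y)
          + (\<Sum>x\<in>V0. w x * M x a * w a) + qform V0 M w"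
  unfolding qform_def using assms by (simp add: sum.distrib add.assoc)

lemma qform_cong: "(\<And>x. x \<in> V \<Longrightarrow> v x = w x) \<Longrightarrow> qform V M v = qform V M w"
  unfolding qform_def by (intro sum.cong refl) auto

lemma det_on_pos:
  fixes V :: "'v set" and M :: "'v \<Rightarrow> 'v \<Rightarrow> real"
  assumes "finite V"
  shows "(\<forall>x\<in>V. \<forall>y\<in>V. M x y = M y x) \<Longrightarrow> (\<forall>v. (\<exists>x\<in>V. v x \<noteq> 0) \<longrightarrow> qform V M v > 0) \<Longrightarrow> det_on V M > 0"
  using assms
proof (induction V arbitrary: M rule: finite_induct)
  case empty
  then show ?case by (simp add: det_on_empty)
next
  case (insert a V0 M)
  note sym = insert.prems(1) and pd = insert.prems(2)
  let ?V = "insert a V0"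
  have Maa: "M a a > 0"
  proof -
    have "qform ?V M (\<lambda>x. if x = a then 1 else 0) > 0"
      by (rule pd[rule_format]) simp
    moreover have "qform ?V M (\<lambda>x. if x = a then 1 else 0) = M a a"
    proof -
      have "qform ?V M (\<lambda>x. if x = a then 1 else 0) =
         (\<Sum>x\<in>?V. (if x = a then (\<Sum>y\<in>?V. if y = a then M a a else 0) else 0))"
        unfolding qform_def by (intro sum.cong refl) (auto intro!: sum.cong)
      also have "\<dots> = M a a" using insert.hyps by (simp add: subset_insertI)
      finally show ?thesis .
    qed
    ultimately show ?thesis by simp
  qed
  define N where "N = (\<lambda>x y. if x \<in> V0 then M x y - (M x a / M a a) * M a y else M x y)"
  have "det_on ?V N = det_on ?V M"
    unfolding N_def using det_on_rowops[of ?V a V0 M "\<lambda>x. M x a / M a a"] insert.hyps by (simp add: subset_insertI)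
  moreover have "det_on ?V N = N a a * det_on V0 N"
    by (rule det_on_col_expand) (use insert.hyps Maa in \<open>auto simp: N_def\<close>)
  moreover have "N a a = M a a" using insert.hyps by (simp add: N_def)
  moreover have "det_on V0 N > 0"
  proof (rule insert.IH)
    show "\<forall>x\<in>V0. \<forall>y\<in>V0. N x y = N y x"
    proof (intro ballI)
      fix x y assume x: "x \<in> V0" and y: "y \<in> V0"
      have e1: "M y x = M x y" using sym[rule_format, of y x] x y by simp
      have e2: "M y a = M a y" using sym[rule_format, of y a] y by simp
      have e3: "M a x = M x a" using sym[rule_format, of a x] x by simp
      have "N y x = M x y - M a y / M a a * M x a" unfolding N_def using y by (simp only: e1 e2 e3 if_True)
      also have "\<dots> = M x y - M x a / M a a * M a y" by (simp add: field_simps)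
      also have "\<dots> = N x y" unfolding N_def using x by simp
      finally show "N x y = N y x" by simp
    qed
    show "\<forall>v. (\<exists>x\<in>V0. v x \<noteq> 0) \<longrightarrow> 0 < qform V0 N v"
    proof (intro allI impI)
      fix v :: "'v \<Rightarrow> real" assume ex: "\<exists>x\<in>V0. v x \<noteq> 0"
      define m where "m = (\<Sum>y\<in>V0. M a y * v y)"
      define w where "w = v(a := - m / M a a)"
      have wv0: "\<And>x. x \<in> V0 \<Longrightarrow> w x = v x" using insert.hyps by (auto simp: w_def)
      have "\<exists>x\<in>?V. w x \<noteq> 0" using ex wv0 by auto
      hence "qform ?V M w > 0" by (rule pd[rule_format])
      moreover have "qform ?V M w = qform V0 N v"
      proof -
        have wv: "\<And>x. x \<in> V0 \<Longrightarrow> w x = v x" using insert.hyps by (auto simp: w_def)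
        have m2: "(\<Sum>x\<in>V0. v x * M x a) = m" unfolding m_def
        proof (intro sum.cong refl)
          fix x assume x: "x \<in> V0"
          have "M x a = M a x" using sym[rule_format, of x a] x by simp
          thus "v x * M x a = M a x * v x" by (simp only: mult.commute)
        qed
        have "qform ?V M w = w a * M a a * w a + (\<Sum>y\<in>V0. w a * M a y * w y)
          + (\<Sum>x\<in>V0. w x * M x a * w a) + qform V0 M w"
          by (rule qform_insert) (use insert.hyps in auto)
        also have "qform V0 M w = qform V0 M v" by (rule qform_cong) (simp add: wv)
        also have "(\<Sum>y\<in>V0. w a * M a y * w y) = w a * m"
        proof -
          have "(\<Sum>y\<in>V0. w a * M a y * w y) = (\<Sum>y\<in>V0. w a * (M a y * v y))"
            by (intro sum.cong refl) (simp add: wv)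
          thus ?thesis unfolding m_def by (simp only: sum_distrib_left)
        qed
        also have "(\<Sum>x\<in>V0. w x * M x a * w a) = m * w a"
        proof -
          have "(\<Sum>x\<in>V0. w x * M x a * w a) = (\<Sum>x\<in>V0. v x * M x a) * w a"
            by (simp only: sum_distrib_right) (intro sum.cong refl, simp add: wv)
          thus ?thesis using m2 by simp
        qed
        also have "w a * M a a * w a + w a * m + m * w a = - (m * m / M a a)"
          using Maa by (simp add: w_def field_simps)
        finally have A: "qform ?V M w = qform V0 M v - m * m / M a a"
          by simp
        have "qform V0 N v = (\<Sum>x\<in>V0. \<Sum>y\<in>V0. v x * M x y * v y - (v x * M x a) * (M a y * v y) / M a a)"
          unfolding qform_def N_def by (intro sum.cong refl) (simp add: algebra_simps)
        also have "\<dots> = qform V0 M v - (\<Sum>x\<in>V0. \<Sum>y\<in>V0. (v x * M x a) * (M a y * v y)) / M a a"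
          unfolding qform_def by (simp add: sum_subtractf sum_divide_distrib)
        also have "(\<Sum>x\<in>V0. \<Sum>y\<in>V0. (v x * M x a) * (M a y * v y)) = m * m"
        proof -
          have "(\<Sum>x\<in>V0. \<Sum>y\<in>V0. (v x * M x a) * (M a y * v y)) = (\<Sum>x\<in>V0. v x * M x a) * (\<Sum>y\<in>V0. M a y * v y)"
            by (simp add: sum_product)
          thus ?thesis using m2 unfolding m_def by simp
        qed
        finally show ?thesis using A by simp
      qed
      ultimately show "0 < qform V0 N v" by simp
    qed
  qed
  ultimately have "det_on ?V M = M a a * det_on V0 N" by metis
  with Maa \<open>det_on V0 N > 0\<close> show ?case by (metis mult_pos_pos)
qed



definition dif :: "('e \<Rightarrow> 'v \<times> 'v) \<Rightarrow> ('v \<Rightarrow> real) \<Rightarrow> 'e \<Rightarrow> real" where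
  "dif ends f e = f (fst (ends e)) - f (snd (ends e))"

definition bil :: "'e set \<Rightarrow> ('e \<Rightarrow> 'v \<times> 'v) \<Rightarrow> ('e \<Rightarrow> real) \<Rightarrow> ('v \<Rightarrow> real) \<Rightarrow> ('v \<Rightarrow> real) \<Rightarrow> real" where
  "bil E ends c f g = (\<Sum>e\<in>E. c e * dif ends f e * dif ends g e)"

definition energy :: "'e set \<Rightarrow> ('e \<Rightarrow> 'v \<times> 'v) \<Rightarrow> ('e \<Rightarrow> real) \<Rightarrow> ('v \<Rightarrow> real) \<Rightarrow> real" where
  "energy E ends c f = (\<Sum>e\<in>E. c e * (dif ends f e)^2)"

definition lapM :: "'v set \<Rightarrow> 'e set \<Rightarrow> ('e \<Rightarrow> 'v \<times> 'v) \<Rightarrow> ('e \<Rightarrow> real) \<Rightarrow> 'v \<Rightarrow> 'v \<Rightarrow> real" where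
  "lapM V E ends c x y = laplacian E ends c (\<lambda>z. if z = y then 1 else 0) x + 1 / real (card V)"

abbreviation ebv :: "('e \<Rightarrow> 'v \<times> 'v) \<Rightarrow> 'e \<Rightarrow> 'v \<Rightarrow> real" where
  "ebv ends e \<equiv> bvec (fst (ends e)) (snd (ends e))"

lemma det_lap_eq: "det_lap V E ends c = det_on V (lapM V E ends c)"
  unfolding det_lap_def lapM_def by simp

lemma lap_entry:
  "laplacian E ends c (\<lambda>z. if z = y then 1 else 0) x = (\<Sum>e\<in>E. c e * (ebv ends e x * ebv ends e y))"
  unfolding laplacian_def
  by (intro sum.cong refl) (auto simp: bvec_def)

lemma lapM_alt: "lapM V E ends c x y = (\<Sum>e\<in>E. c e * (ebv ends e x * ebv ends e y)) + 1 / real (card V)"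
  unfolding lapM_def lap_entry by simp

lemma lapM_sym: "lapM V E ends c x y = lapM V E ends c y x"
  unfolding lapM_alt by (simp add: mult.commute)

lemma sum_bvec:
  assumes "finite V" "a \<in> V" "b \<in> V"
  shows "(\<Sum>y\<in>V. bvec a b y * w y) = w a - w b"
proof -
  have "(\<Sum>y\<in>V. bvec a b y * w y) = (\<Sum>y\<in>V. (if y = a then w y else 0)) - (\<Sum>y\<in>V. (if y = b then w y else 0))"
  proof -
    have "bvec a b y * w y = (if y = a then w y else 0) - (if y = b then w y else 0)" for y
      by (simp add: bvec_def)
    thus ?thesis by (simp add: sum_subtractf)
  qed
  also have "\<dots> = w a - w b" using assms by simp
  finally show ?thesis .
qed

lemma lapM_apply:
  assumes mg: "multigraph V E ends"
  shows "(\<Sum>y\<in>V. lapM V E ends c x y * w y) =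
     (\<Sum>e\<in>E. c e * ebv ends e x * dif ends w e) + (\<Sum>y\<in>V. w y) / real (card V)"
proof -
  have V: "finite V" and E: "finite E" and ends: "\<And>e. e \<in> E \<Longrightarrow> fst (ends e) \<in> V \<and> snd (ends e) \<in> V"
    using mg by (auto simp: multigraph_def)
  have "(\<Sum>y\<in>V. lapM V E ends c x y * w y) =
    (\<Sum>y\<in>V. (\<Sum>e\<in>E. c e * ebv ends e x * (ebv ends e y * w y)) + w y / real (card V))"
  proof (intro sum.cong refl)
    fix y
    have "lapM V E ends c x y * w y = (\<Sum>e\<in>E. c e * (ebv ends e x * ebv ends e y) * w y) + w y / real (card V)"
      unfolding lapM_alt distrib_right sum_distrib_right by simp
    also have "\<dots> = (\<Sum>e\<in>E. c e * ebv ends e x * (ebv ends e y * w y)) + w y / real (card V)"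
      by (simp add: mult_ac)
    finally show "lapM V E ends c x y * w y = (\<Sum>e\<in>E. c e * ebv ends e x * (ebv ends e y * w y)) + w y / real (card V)" .
  qed
  also have "\<dots> = (\<Sum>e\<in>E. \<Sum>y\<in>V. c e * ebv ends e x * (ebv ends e y * w y)) + (\<Sum>y\<in>V. w y) / real (card V)"
    by (simp add: sum.distrib sum_divide_distrib sum.swap[of _ V E])
  also have "(\<Sum>e\<in>E. \<Sum>y\<in>V. c e * ebv ends e x * (ebv ends e y * w y)) = (\<Sum>e\<in>E. c e * ebv ends e x * dif ends w e)"
  proof (intro sum.cong refl)
    fix e assume e: "e \<in> E"
    have "(\<Sum>y\<in>V. c e * ebv ends e x * (ebv ends e y * w y)) = c e * ebv ends e x * (\<Sum>y\<in>V. ebv ends e y * w y)"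
      by (simp add: sum_distrib_left)
    also have "(\<Sum>y\<in>V. ebv ends e y * w y) = dif ends w e"
      unfolding dif_def by (rule sum_bvec) (use V ends[OF e] in auto)
    finally show "(\<Sum>y\<in>V. c e * ebv ends e x * (ebv ends e y * w y)) = c e * ebv ends e x * dif ends w e" .
  qed
  finally show ?thesis .
qed

lemma lapM_pair:
  assumes mg: "multigraph V E ends"
  shows "(\<Sum>x\<in>V. v x * (\<Sum>y\<in>V. lapM V E ends c x y * w y)) =
     bil E ends c v w + (\<Sum>x\<in>V. v x) * (\<Sum>y\<in>V. w y) / real (card V)"
proof -
  have V: "finite V" and E: "finite E" and ends: "\<And>e. e \<in> E \<Longrightarrow> fst (ends e) \<in> V \<and> snd (ends e) \<in> V"
    using mg by (auto simp: multigraph_def)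
  have "(\<Sum>x\<in>V. v x * (\<Sum>y\<in>V. lapM V E ends c x y * w y)) =
     (\<Sum>x\<in>V. (\<Sum>e\<in>E. c e * dif ends w e * (ebv ends e x * v x)) + v x * ((\<Sum>y\<in>V. w y) / real (card V)))"
    unfolding lapM_apply[OF mg] by (intro sum.cong refl) (simp add: sum_distrib_left algebra_simps)
  also have "\<dots> = (\<Sum>x\<in>V. \<Sum>e\<in>E. c e * dif ends w e * (ebv ends e x * v x)) + (\<Sum>x\<in>V. v x * ((\<Sum>y\<in>V. w y) / real (card V)))"
    by (rule sum.distrib)
  also have "(\<Sum>x\<in>V. v x * ((\<Sum>y\<in>V. w y) / real (card V))) = (\<Sum>x\<in>V. v x) * ((\<Sum>y\<in>V. w y) / real (card V))"
    by (rule sum_distrib_right[symmetric])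
  also have "(\<Sum>x\<in>V. \<Sum>e\<in>E. c e * dif ends w e * (ebv ends e x * v x)) = (\<Sum>e\<in>E. \<Sum>x\<in>V. c e * dif ends w e * (ebv ends e x * v x))"
    by (rule sum.swap)
  also have "(\<Sum>e\<in>E. \<Sum>x\<in>V. c e * dif ends w e * (ebv ends e x * v x)) = bil E ends c v w"
    unfolding bil_def
  proof (intro sum.cong refl)
    fix e assume e: "e \<in> E"
    have "(\<Sum>x\<in>V. c e * dif ends w e * (ebv ends e x * v x)) = c e * dif ends w e * (\<Sum>x\<in>V. ebv ends e x * v x)"
      by (simp add: sum_distrib_left)
    also have "(\<Sum>x\<in>V. ebv ends e x * v x) = dif ends v e"
      unfolding dif_def by (rule sum_bvec) (use V ends[OF e] in auto)
    finally show "(\<Sum>x\<in>V. c e * dif ends w e * (ebv ends e x * v x)) = c e * dif ends v e * dif ends w e"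
      by simp
  qed
  finally show ?thesis by simp
qed

lemma qform_lapM:
  assumes mg: "multigraph V E ends"
  shows "qform V (lapM V E ends c) v = energy E ends c v + (\<Sum>x\<in>V. v x)^2 / real (card V)"
proof -
  have "qform V (lapM V E ends c) v = (\<Sum>x\<in>V. v x * (\<Sum>y\<in>V. lapM V E ends c x y * v y))"
    unfolding qform_def by (simp add: sum_distrib_left mult.assoc)
  also have "\<dots> = bil E ends c v v + (\<Sum>x\<in>V. v x)^2 / real (card V)"
    unfolding lapM_pair[OF mg] by (simp add: power2_eq_square)
  also have "bil E ends c v v = energy E ends c v"
    unfolding bil_def energy_def by (simp add: power2_eq_square mult.assoc)
  finally show ?thesis .
qed

lemma energy_nonneg: "(\<And>e. e \<in> E \<Longrightarrow> c e \<ge> 0) \<Longrightarrow> energy E ends c f \<ge> 0"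
  unfolding energy_def by (intro sum_nonneg) auto

lemma connected_const:
  assumes "\<And>e. e \<in> E \<Longrightarrow> dif ends v e = 0" and "(adj E ends)\<^sup>*\<^sup>* x y"
  shows "v y = v x"
  using assms(2)
proof (induction rule: rtranclp_induct)
  case base then show ?case by simp
next
  case (step y z)
  from step.hyps(2) obtain e where e: "e \<in> E" "ends e = (y, z) \<or> ends e = (z, y)"
    unfolding adj_def by blast
  have "dif ends v e = 0" using assms(1) e(1) by simp
  hence "v y = v z" using e(2) unfolding dif_def by auto
  with step.IH show ?case by simp
qed

lemma lapM_pd:
  assumes conn: "connected_mg V E ends" and cpos: "\<And>e. e \<in> E \<Longrightarrow> c e > 0"
    and ex: "\<exists>x\<in>V. v x \<noteq> 0"
  shows "qform V (lapM V E ends c) v > 0"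
proof (rule ccontr)
  assume np: "\<not> ?thesis"
  have mg: "multigraph V E ends" and Vne: "V \<noteq> {}" and path: "\<forall>x\<in>V. \<forall>y\<in>V. (adj E ends)\<^sup>*\<^sup>* x y"
    using conn by (auto simp: connected_mg_def)
  have V: "finite V" and E: "finite E" using mg by (auto simp: multigraph_def)
  have n: "real (card V) > 0" using V Vne by (simp add: card_gt_0_iff)
  have en: "energy E ends c v \<ge> 0" by (rule energy_nonneg) (use cpos in \<open>auto intro: less_imp_le\<close>)
  have sq: "(\<Sum>x\<in>V. v x)^2 / real (card V) \<ge> 0" using n by simp
  have q0: "energy E ends c v + (\<Sum>x\<in>V. v x)^2 / real (card V) \<le> 0" using np qform_lapM[OF mg] by simp
  hence e0: "energy E ends c v = 0" and s0: "(\<Sum>x\<in>V. v x)^2 / real (card V) = 0" using en sq by linarith+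
  have terms: "\<forall>e\<in>E. c e * (dif ends v e)^2 = 0"
  proof -
    have cnn: "\<forall>e\<in>E. c e \<ge> 0" using cpos less_imp_le by blast
    show ?thesis using e0 unfolding energy_def
      by (subst (asm) sum_nonneg_eq_0_iff) (use E cnn in auto)
  qed
  have d0: "\<And>e. e \<in> E \<Longrightarrow> dif ends v e = 0"
    using terms cpos by (metis less_irrefl mult_eq_0_iff power_eq_0_iff)
  obtain x0 where x0: "x0 \<in> V" "v x0 \<noteq> 0" using ex by blast
  have const: "\<And>y. y \<in> V \<Longrightarrow> v y = v x0"
    using connected_const[OF d0] path x0(1) by blast
  have "(\<Sum>x\<in>V. v x) = real (card V) * v x0" using const by simp
  hence "(\<Sum>x\<in>V. v x) \<noteq> 0" using n x0 by simp
  hence "(\<Sum>x\<in>V. v x)^2 / real (card V) > 0" using n by simp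
  with s0 show False by linarith
qed



lemma dif_diff: "dif ends (\<lambda>x. f x - g x) e = dif ends f e - dif ends g e"
  unfolding dif_def by simp

lemma energy_diff:
  "energy E ends c (\<lambda>x. f x - g x) = energy E ends c f - 2 * bil E ends c f g + energy E ends c g"
proof -
  have "c e * (dif ends (\<lambda>x. f x - g x) e)^2 = c e * (dif ends f e)^2 - 2 * (c e * dif ends f e * dif ends g e) + c e * (dif ends g e)^2" for e
    unfolding dif_diff by (simp add: power2_diff algebra_simps)
  hence "energy E ends c (\<lambda>x. f x - g x) = (\<Sum>e\<in>E. c e * (dif ends f e)^2 - 2 * (c e * dif ends f e * dif ends g e) + c e * (dif ends g e)^2)"
    unfolding energy_def by simp
  also have "\<dots> = energy E ends c f - 2 * bil E ends c f g + energy E ends c g"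
    unfolding energy_def bil_def by (simp add: sum.distrib sum_subtractf sum_distrib_left)
  finally show ?thesis .
qed

lemma lapM_update:
  assumes E: "finite E" and e0: "e0 \<in> E"
  shows "lapM V E ends (c(e0 := c e0 + t)) x y = lapM V E ends c x y + t * (ebv ends e0 x * ebv ends e0 y)"
proof -
  have "(c(e0 := c e0 + t)) e * (ebv ends e x * ebv ends e y) =
        c e * (ebv ends e x * ebv ends e y) + (if e = e0 then t * (ebv ends e x * ebv ends e y) else 0)" for e
    by (simp add: algebra_simps)
  hence "(\<Sum>e\<in>E. (c(e0 := c e0 + t)) e * (ebv ends e x * ebv ends e y)) =
     (\<Sum>e\<in>E. c e * (ebv ends e x * ebv ends e y)) + (\<Sum>e\<in>E. (if e = e0 then t * (ebv ends e x * ebv ends e y) else 0))"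
    by (simp add: sum.distrib)
  also have "(\<Sum>e\<in>E. (if e = e0 then t * (ebv ends e x * ebv ends e y) else 0)) = t * (ebv ends e0 x * ebv ends e0 y)"
    using E e0 by simp
  finally show ?thesis unfolding lapM_alt by simp
qed

lemma graph_main:
  assumes conn: "connected_mg V E ends" and cpos: "\<And>e. e \<in> E \<Longrightarrow> c e > 0" and e0: "e0 \<in> E"
  shows "det_lap V E ends c > 0 \<and>
    (\<exists>R\<ge>0. (\<forall>t. det_lap V E ends (c(e0 := c e0 + t)) = det_lap V E ends c * (1 + t * R)) \<and>
       (\<forall>f. 2 * dif ends f e0 - energy E ends c f \<le> R) \<and>
       (\<exists>f. 2 * dif ends f e0 - energy E ends c f = R))"
proof -
  have mg: "multigraph V E ends" and Vne: "V \<noteq> {}"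
    using conn by (auto simp: connected_mg_def)
  have V: "finite V" and E: "finite E" and ends: "\<And>e. e \<in> E \<Longrightarrow> fst (ends e) \<in> V \<and> snd (ends e) \<in> V"
    using mg by (auto simp: multigraph_def)
  have n: "real (card V) > 0" using V Vne by (simp add: card_gt_0_iff)
  let ?M = "lapM V E ends c"
  define a0 where "a0 = fst (ends e0)"
  define b0 where "b0 = snd (ends e0)"
  have a0: "a0 \<in> V" and b0: "b0 \<in> V" using ends[OF e0] by (auto simp: a0_def b0_def)
  have cnn: "\<And>e. e \<in> E \<Longrightarrow> c e \<ge> 0" using cpos less_imp_le by blast
  have dpos: "det_on V ?M > 0"
    by (rule det_on_pos[OF V]) (use lapM_sym lapM_pd[OF conn cpos] in auto)
  then obtain u where u: "\<forall>w\<in>V. (\<Sum>x\<in>V. ?M w x * u x) = bvec a0 b0 w"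
    using det_on_solve[OF V, of ?M "bvec a0 b0"] by auto
  have pair: "bil E ends c f u + (\<Sum>x\<in>V. f x) * (\<Sum>y\<in>V. u y) / real (card V) = dif ends f e0" for f
  proof -
    have "bil E ends c f u + (\<Sum>x\<in>V. f x) * (\<Sum>y\<in>V. u y) / real (card V) =
          (\<Sum>x\<in>V. f x * (\<Sum>y\<in>V. ?M x y * u y))"
      by (rule lapM_pair[OF mg, symmetric])
    also have "\<dots> = (\<Sum>x\<in>V. bvec a0 b0 x * f x)"
      using u by (intro sum.cong refl) (simp add: mult.commute)
    also have "\<dots> = dif ends f e0" unfolding dif_def a0_def[symmetric] b0_def[symmetric]
      by (rule sum_bvec[OF V a0 b0])
    finally show ?thesis .
  qed
  have su: "(\<Sum>y\<in>V. u y) = 0"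
  proof -
    have "bil E ends c (\<lambda>_. 1) u = 0" unfolding bil_def dif_def by simp
    moreover have "dif ends (\<lambda>_. 1) e0 = 0" unfolding dif_def by simp
    moreover have "(\<Sum>x\<in>V. (\<lambda>_. 1::real) x) = real (card V)" by simp
    ultimately have "real (card V) * (\<Sum>y\<in>V. u y) / real (card V) = 0" using pair[of "\<lambda>_. 1"] by simp
    thus ?thesis using n by simp
  qed
  have bu: "bil E ends c f u = dif ends f e0" for f using pair[of f] su by simp
  define R where "R = dif ends u e0"
  have enu: "energy E ends c u = R"
    using bu[of u] unfolding R_def bil_def energy_def by (simp add: power2_eq_square mult.assoc)
  have R0: "R \<ge> 0" using energy_nonneg[of E c ends u] cnn enu by simp
  have det_upd: "det_lap V E ends (c(e0 := c e0 + t)) = det_lap V E ends c * (1 + t * R)" for t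
  proof -
    have "det_lap V E ends (c(e0 := c e0 + t)) = det_on V (\<lambda>x y. ?M x y + t * bvec a0 b0 x * bvec a0 b0 y)"
    proof -
      have "lapM V E ends (c(e0 := c e0 + t)) = (\<lambda>x y. ?M x y + t * bvec a0 b0 x * bvec a0 b0 y)"
        by (intro ext) (simp add: lapM_update[OF E e0] a0_def b0_def mult.assoc)
      thus ?thesis unfolding det_lap_eq by simp
    qed
    also have "\<dots> = det_on V ?M * (1 + t * (u a0 - u b0))"
      by (rule det_on_rank_one[OF V a0 b0]) (use lapM_sym u in auto)
    finally show ?thesis unfolding det_lap_eq R_def dif_def a0_def b0_def by simp
  qed
  have var: "2 * dif ends f e0 - energy E ends c f \<le> R" for f
  proof -
    have "energy E ends c (\<lambda>x. f x - u x) \<ge> 0" using energy_nonneg cnn by blast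
    thus ?thesis unfolding energy_diff bu enu by simp
  qed
  have att: "2 * dif ends u e0 - energy E ends c u = R" using enu R_def by simp
  show ?thesis using dpos det_upd var att R0 unfolding det_lap_eq by blast
qed



definition xsup :: "('e \<Rightarrow> bool) \<Rightarrow> ('e \<Rightarrow> bool) \<Rightarrow> 'e \<Rightarrow> bool" where
  "xsup x y = (\<lambda>e. x e \<or> y e)"
definition xinf :: "('e \<Rightarrow> bool) \<Rightarrow> ('e \<Rightarrow> bool) \<Rightarrow> 'e \<Rightarrow> bool" where
  "xinf x y = (\<lambda>e. x e \<and> y e)"

lemma cfgs_finite:
  assumes "finite D" shows "finite (cfgs D)"
proof -
  have "cfgs D \<subseteq> (\<lambda>S e. e \<in> S) ` Pow D"
  proof
    fix \<omega> assume w: "\<omega> \<in> cfgs D"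
    have "\<omega> = (\<lambda>e. e \<in> {e\<in>D. \<omega> e})" using w by (auto simp: cfgs_def fun_eq_iff)
    thus "\<omega> \<in> (\<lambda>S e. e \<in> S) ` Pow D" by blast
  qed
  thus ?thesis using assms by (meson finite_Pow_iff finite_imageI finite_subset)
qed

lemma cfgs_sup: "x \<in> cfgs D \<Longrightarrow> y \<in> cfgs D \<Longrightarrow> xsup x y \<in> cfgs D"
  and cfgs_inf: "x \<in> cfgs D \<Longrightarrow> y \<in> cfgs D \<Longrightarrow> xinf x y \<in> cfgs D"
  by (auto simp: cfgs_def xsup_def xinf_def)

lemma cfgs_empty: "cfgs {} = {\<lambda>_. False}"
  by (auto simp: cfgs_def fun_eq_iff)

lemma cfgs_insert_sum:
  assumes "a \<notin> D0" "finite D0"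
  shows "sum g (cfgs (insert a D0)) = (\<Sum>x\<in>cfgs D0. g x + g (x(a := True)))"
proof -
  have eq: "cfgs (insert a D0) = cfgs D0 \<union> (\<lambda>x. x(a := True)) ` cfgs D0"
  proof (intro equalityI subsetI)
    fix x assume x: "x \<in> cfgs (insert a D0)"
    show "x \<in> cfgs D0 \<union> (\<lambda>x. x(a := True)) ` cfgs D0"
    proof (cases "x a")
      case True
      have "x = (x(a := False))(a := True)" using True by (auto simp: fun_eq_iff)
      moreover have "x(a := False) \<in> cfgs D0" using x by (auto simp: cfgs_def)
      ultimately show ?thesis by blast
    next
      case False
      then have "x \<in> cfgs D0" using x by (auto simp: cfgs_def)
      then show ?thesis by blast
    qed
  qed (auto simp: cfgs_def)
  have disj: "cfgs D0 \<inter> (\<lambda>x. x(a := True)) ` cfgs D0 = {}"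
    using assms by (auto simp: cfgs_def)
  have inj: "inj_on (\<lambda>x. x(a := True)) (cfgs D0)"
  proof (rule inj_onI)
    fix x y assume x: "x \<in> cfgs D0" and y: "y \<in> cfgs D0" and xy: "x(a := True) = y(a := True)"
    have "x a = y a" using x y assms(1) by (auto simp: cfgs_def)
    show "x = y"
    proof
      fix e show "x e = y e" using \<open>x a = y a\<close> fun_cong[OF xy, of e] by (cases "e = a") auto
    qed
  qed
  have f: "finite (cfgs D0)" by (rule cfgs_finite[OF assms(2)])
  have "sum g (cfgs (insert a D0)) = sum g (cfgs D0) + sum g ((\<lambda>x. x(a := True)) ` cfgs D0)"
    unfolding eq by (rule sum.union_disjoint) (use f disj in auto)
  also have "sum g ((\<lambda>x. x(a := True)) ` cfgs D0) = (\<Sum>x\<in>cfgs D0. g (x(a := True)))"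
    by (rule sum.reindex[OF inj, unfolded comp_def])
  finally show ?thesis by (simp add: sum.distrib)
qed

lemma two_point:
  fixes a0 a1 b0 b1 c0 c1 d0 d1 :: real
  assumes nn: "0 \<le> a0" "0 \<le> a1" "0 \<le> b0" "0 \<le> b1" "0 \<le> c0" "0 \<le> c1" "0 \<le> d0" "0 \<le> d1"
    and h1: "a0 * b0 \<le> c0 * d0" and h2: "a0 * b1 \<le> c1 * d0" and h3: "a1 * b0 \<le> c1 * d0"
    and h4: "a1 * b1 \<le> c1 * d1"
  shows "(a0 + a1) * (b0 + b1) \<le> (c0 + c1) * (d0 + d1)"
proof -
  have cd: "0 \<le> c0 * d1" using nn by simp
  have mid: "a0 * b1 + a1 * b0 \<le> c1 * d0 + c0 * d1"
  proof (cases "c1 * d0 = 0")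
    case True
    have "a0 * b1 \<le> 0" "a1 * b0 \<le> 0" using h2 h3 True by simp_all
    moreover have "0 \<le> a0 * b1" "0 \<le> a1 * b0" using nn by simp_all
    ultimately show ?thesis using cd True by linarith
  next
    case False
    define T where "T = c1 * d0"
    have T: "T > 0" using False nn unfolding T_def by (simp add: less_le)
    define u where "u = a0 * b1"
    define v where "v = a1 * b0"
    have u: "0 \<le> u" "u \<le> T" using nn h2 by (simp_all add: u_def T_def)
    have v: "0 \<le> v" "v \<le> T" using nn h3 by (simp_all add: v_def T_def)
    have "u * v = (a0 * b0) * (a1 * b1)" by (simp add: u_def v_def mult_ac)
    also have "\<dots> \<le> (c0 * d0) * (c1 * d1)"
      by (rule mult_mono[OF h1 h4]) (use nn in simp_all)
    also have "\<dots> = (c0 * d1) * T" by (simp add: T_def mult_ac)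
    finally have uv: "u * v \<le> (c0 * d1) * T" .
    have "0 \<le> (T - u) * (T - v)" using u v by simp
    hence "T * (u + v) \<le> T * T + u * v" by (simp add: algebra_simps)
    also have "\<dots> \<le> T * T + (c0 * d1) * T" using uv by simp
    finally have "T * (u + v) \<le> T * (T + c0 * d1)" by (simp add: algebra_simps)
    hence "u + v \<le> T + c0 * d1" using T by simp
    thus ?thesis unfolding u_def v_def T_def by simp
  qed
  have "(a0 + a1) * (b0 + b1) = a0 * b0 + (a0 * b1 + a1 * b0) + a1 * b1" by (simp add: algebra_simps)
  also have "\<dots> \<le> c0 * d0 + (c1 * d0 + c0 * d1) + c1 * d1" using h1 mid h4 by linarith
  also have "\<dots> \<le> (c0 + c1) * (d0 + d1)" by (simp add: algebra_simps)
  finally show ?thesis .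
qed

lemma four_functions:
  fixes \<alpha> \<beta> \<gamma> \<delta> :: "('e \<Rightarrow> bool) \<Rightarrow> real"
  assumes "finite D"
  shows "(\<forall>x\<in>cfgs D. 0 \<le> \<alpha> x \<and> 0 \<le> \<beta> x \<and> 0 \<le> \<gamma> x \<and> 0 \<le> \<delta> x) \<Longrightarrow>
    (\<forall>x\<in>cfgs D. \<forall>y\<in>cfgs D. \<alpha> x * \<beta> y \<le> \<gamma> (xsup x y) * \<delta> (xinf x y)) \<Longrightarrow>
    sum \<alpha> (cfgs D) * sum \<beta> (cfgs D) \<le> sum \<gamma> (cfgs D) * sum \<delta> (cfgs D)"
  using assms
proof (induction D arbitrary: \<alpha> \<beta> \<gamma> \<delta> rule: finite_induct)
  case empty
  have e: "xsup (\<lambda>_. False) (\<lambda>_. False) = (\<lambda>_::'e. False)" "xinf (\<lambda>_. False) (\<lambda>_. False) = (\<lambda>_::'e. False)"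
    by (auto simp: xsup_def xinf_def)
  have "\<alpha> (\<lambda>_. False) * \<beta> (\<lambda>_. False) \<le> \<gamma> (xsup (\<lambda>_. False) (\<lambda>_. False)) * \<delta> (xinf (\<lambda>_. False) (\<lambda>_. False))"
    using empty.prems(2) by (simp add: cfgs_empty)
  hence "\<alpha> (\<lambda>_. False) * \<beta> (\<lambda>_. False) \<le> \<gamma> (\<lambda>_. False) * \<delta> (\<lambda>_. False)" unfolding e .
  thus ?case by (simp add: cfgs_empty)
next
  case (insert a D0)
  note nn = insert.prems(1) and hyp = insert.prems(2)
  let ?u = "\<lambda>x. x(a := True)"
  have sub: "x \<in> cfgs D0 \<Longrightarrow> x \<in> cfgs (insert a D0)" for x by (auto simp: cfgs_def)
  have subu: "x \<in> cfgs D0 \<Longrightarrow> ?u x \<in> cfgs (insert a D0)" for x by (auto simp: cfgs_def)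
  have xa: "x \<in> cfgs D0 \<Longrightarrow> \<not> x a" for x using insert.hyps by (auto simp: cfgs_def)
  define \<alpha>' where "\<alpha>' x = \<alpha> x + \<alpha> (?u x)" for x
  define \<beta>' where "\<beta>' x = \<beta> x + \<beta> (?u x)" for x
  define \<gamma>' where "\<gamma>' x = \<gamma> x + \<gamma> (?u x)" for x
  define \<delta>' where "\<delta>' x = \<delta> x + \<delta> (?u x)" for x
  have IH: "sum \<alpha>' (cfgs D0) * sum \<beta>' (cfgs D0) \<le> sum \<gamma>' (cfgs D0) * sum \<delta>' (cfgs D0)"
  proof (rule insert.IH)
    show "\<forall>x\<in>cfgs D0. 0 \<le> \<alpha>' x \<and> 0 \<le> \<beta>' x \<and> 0 \<le> \<gamma>' x \<and> 0 \<le> \<delta>' x"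
    proof
      fix x assume x: "x \<in> cfgs D0"
      have A: "0 \<le> \<alpha> x \<and> 0 \<le> \<beta> x \<and> 0 \<le> \<gamma> x \<and> 0 \<le> \<delta> x" using nn sub[OF x] by blast
      have B: "0 \<le> \<alpha> (?u x) \<and> 0 \<le> \<beta> (?u x) \<and> 0 \<le> \<gamma> (?u x) \<and> 0 \<le> \<delta> (?u x)" using nn subu[OF x] by blast
      show "0 \<le> \<alpha>' x \<and> 0 \<le> \<beta>' x \<and> 0 \<le> \<gamma>' x \<and> 0 \<le> \<delta>' x"
        unfolding \<alpha>'_def \<beta>'_def \<gamma>'_def \<delta>'_def using A B by simp
    qed
    show "\<forall>x\<in>cfgs D0. \<forall>y\<in>cfgs D0. \<alpha>' x * \<beta>' y \<le> \<gamma>' (xsup x y) * \<delta>' (xinf x y)"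
    proof (intro ballI)
      fix x y assume x: "x \<in> cfgs D0" and y: "y \<in> cfgs D0"
      have e1: "xsup x (?u y) = ?u (xsup x y)" "xsup (?u x) y = ?u (xsup x y)" "xsup (?u x) (?u y) = ?u (xsup x y)"
        by (auto simp: xsup_def fun_eq_iff)
      have e2: "xinf x (?u y) = xinf x y" "xinf (?u x) y = xinf x y" "xinf (?u x) (?u y) = ?u (xinf x y)"
        using xa[OF x] xa[OF y] by (auto simp: xinf_def fun_eq_iff)
      have h: "\<And>x y. x \<in> cfgs (insert a D0) \<Longrightarrow> y \<in> cfgs (insert a D0) \<Longrightarrow> \<alpha> x * \<beta> y \<le> \<gamma> (xsup x y) * \<delta> (xinf x y)"
        using hyp by blast
      have n: "\<And>x. x \<in> cfgs (insert a D0) \<Longrightarrow> 0 \<le> \<alpha> x \<and> 0 \<le> \<beta> x \<and> 0 \<le> \<gamma> x \<and> 0 \<le> \<delta> x"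
        using nn by blast
      have sx: "xsup x y \<in> cfgs D0" "xinf x y \<in> cfgs D0" using x y by (auto intro: cfgs_sup cfgs_inf)
      show "\<alpha>' x * \<beta>' y \<le> \<gamma>' (xsup x y) * \<delta>' (xinf x y)"
        unfolding \<alpha>'_def \<beta>'_def \<gamma>'_def \<delta>'_def
      proof (rule two_point)
        show "\<alpha> x * \<beta> y \<le> \<gamma> (xsup x y) * \<delta> (xinf x y)" using h[OF sub[OF x] sub[OF y]] .
        show "\<alpha> x * \<beta> (?u y) \<le> \<gamma> (?u (xsup x y)) * \<delta> (xinf x y)"
          using h[OF sub[OF x] subu[OF y]] e1 e2 by simp
        show "\<alpha> (?u x) * \<beta> y \<le> \<gamma> (?u (xsup x y)) * \<delta> (xinf x y)"
          using h[OF subu[OF x] sub[OF y]] e1 e2 by simp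
        show "\<alpha> (?u x) * \<beta> (?u y) \<le> \<gamma> (?u (xsup x y)) * \<delta> (?u (xinf x y))"
          using h[OF subu[OF x] subu[OF y]] e1 e2 by simp
      qed (use n[OF sub[OF x]] n[OF subu[OF x]] n[OF sub[OF y]] n[OF subu[OF y]]
               n[OF sub[OF sx(1)]] n[OF subu[OF sx(1)]] n[OF sub[OF sx(2)]] n[OF subu[OF sx(2)]] in simp_all)
    qed
  qed
  show ?case
    using IH unfolding cfgs_insert_sum[OF insert.hyps(2) insert.hyps(1)] \<alpha>'_def \<beta>'_def \<gamma>'_def \<delta>'_def .
qed

lemma holley_lattice:
  fixes w1 w2 :: "('e \<Rightarrow> bool) \<Rightarrow> real"
  assumes D: "finite D" and nn: "\<forall>x\<in>cfgs D. 0 \<le> w1 x \<and> 0 \<le> w2 x"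
    and Z1: "sum w1 (cfgs D) > 0" and Z2: "sum w2 (cfgs D) > 0"
    and lat: "\<forall>x\<in>cfgs D. \<forall>y\<in>cfgs D. w1 x * w2 y \<le> w2 (xsup x y) * w1 (xinf x y)"
    and A: "increasing_event D A"
  shows "sum w1 (A \<inter> cfgs D) / sum w1 (cfgs D) \<le> sum w2 (A \<inter> cfgs D) / sum w2 (cfgs D)"
proof -
  define \<alpha> where "\<alpha> x = (if x \<in> A then w1 x else 0)" for x
  define \<gamma> where "\<gamma> x = (if x \<in> A then w2 x else 0)" for x
  have fin: "finite (cfgs D)" by (rule cfgs_finite[OF D])
  have up: "\<And>x y. x \<in> A \<Longrightarrow> y \<in> cfgs D \<Longrightarrow> xsup x y \<in> A"
  proof -
    fix x y assume x: "x \<in> A" and y: "y \<in> cfgs D"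
    have xc: "x \<in> cfgs D" using A x unfolding increasing_event_def by blast
    have "xsup x y \<in> cfgs D" by (rule cfgs_sup[OF xc y])
    moreover have "\<forall>e. x e \<longrightarrow> xsup x y e" by (simp add: xsup_def)
    ultimately show "xsup x y \<in> A" using A x unfolding increasing_event_def by blast
  qed
  have "sum \<alpha> (cfgs D) * sum w2 (cfgs D) \<le> sum \<gamma> (cfgs D) * sum w1 (cfgs D)"
  proof (rule four_functions[OF D])
    show "\<forall>x\<in>cfgs D. 0 \<le> \<alpha> x \<and> 0 \<le> w2 x \<and> 0 \<le> \<gamma> x \<and> 0 \<le> w1 x"
      using nn by (auto simp: \<alpha>_def \<gamma>_def)
    show "\<forall>x\<in>cfgs D. \<forall>y\<in>cfgs D. \<alpha> x * w2 y \<le> \<gamma> (xsup x y) * w1 (xinf x y)"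
    proof (intro ballI)
      fix x y assume x: "x \<in> cfgs D" and y: "y \<in> cfgs D"
      show "\<alpha> x * w2 y \<le> \<gamma> (xsup x y) * w1 (xinf x y)"
      proof (cases "x \<in> A")
        case True
        then show ?thesis using up[OF True y] lat x y by (simp add: \<alpha>_def \<gamma>_def)
      next
        case False
        have "0 \<le> w2 (xsup x y)" "0 \<le> w1 (xinf x y)"
          using nn cfgs_sup[OF x y] cfgs_inf[OF x y] by auto
        then show ?thesis using False by (simp add: \<alpha>_def \<gamma>_def)
      qed
    qed
  qed
  moreover have "sum \<alpha> (cfgs D) = sum w1 (A \<inter> cfgs D)"
    unfolding \<alpha>_def using sum.inter_restrict[OF fin, of w1 A] by (simp add: Int_commute)
  moreover have "sum \<gamma> (cfgs D) = sum w2 (A \<inter> cfgs D)"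
    unfolding \<gamma>_def using sum.inter_restrict[OF fin, of w2 A] by (simp add: Int_commute)
  ultimately have "sum w1 (A \<inter> cfgs D) * sum w2 (cfgs D) \<le> sum w2 (A \<inter> cfgs D) * sum w1 (cfgs D)" by simp
  thus ?thesis using Z1 Z2 by (simp add: field_simps)
qed

lemma lattice_from_cross:
  fixes w1 w2 :: "('e \<Rightarrow> bool) \<Rightarrow> real"
  assumes D: "finite D" and pos: "\<forall>x\<in>cfgs D. 0 < w1 x \<and> 0 < w2 x"
    and cross: "\<forall>x\<in>cfgs D. \<forall>y\<in>cfgs D. \<forall>e\<in>D. (\<forall>e'. x e' \<longrightarrow> y e') \<longrightarrow> \<not> y e \<longrightarrow>
        w1 (x(e := True)) * w2 y \<le> w1 x * w2 (y(e := True))"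
    and y: "y \<in> cfgs D"
  shows "\<forall>x\<in>cfgs D. w1 x * w2 y \<le> w2 (xsup x y) * w1 (xinf x y)"
proof -
  have main: "\<forall>x\<in>cfgs D. card {e\<in>D. x e \<and> \<not> y e} = n \<longrightarrow> w1 x * w2 y \<le> w1 (xinf x y) * w2 (xsup x y)" for n
  proof (induction n)
    case 0
    show ?case
    proof (intro ballI impI)
      fix x assume x: "x \<in> cfgs D" and c: "card {e\<in>D. x e \<and> \<not> y e} = 0"
      have "{e\<in>D. x e \<and> \<not> y e} = {}" using c D by simp
      hence le: "\<forall>e. x e \<longrightarrow> y e" using x by (auto simp: cfgs_def)
      have "xinf x y = x" "xsup x y = y" using le by (auto simp: xinf_def xsup_def fun_eq_iff)
      thus "w1 x * w2 y \<le> w1 (xinf x y) * w2 (xsup x y)" by simp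
    qed
  next
    case (Suc n)
    show ?case
    proof (intro ballI impI)
      fix x assume x: "x \<in> cfgs D" and c: "card {e\<in>D. x e \<and> \<not> y e} = Suc n"
      have "{e\<in>D. x e \<and> \<not> y e} \<noteq> {}"
      proof
        assume E0: "{e\<in>D. x e \<and> \<not> y e} = {}"
        have "card {e\<in>D. x e \<and> \<not> y e} = 0" by (subst E0) simp
        with c show False by simp
      qed
      then obtain e where e: "e \<in> D" "x e" "\<not> y e" by blast
      define x' where "x' = x(e := False)"
      have x'c: "x' \<in> cfgs D" using x by (auto simp: cfgs_def x'_def)
      have "{e'\<in>D. x' e' \<and> \<not> y e'} = {e'\<in>D. x e' \<and> \<not> y e'} - {e}" by (auto simp: x'_def)
      hence "card {e'\<in>D. x' e' \<and> \<not> y e'} = n" using c e D by simp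
      hence IH: "w1 x' * w2 y \<le> w1 (xinf x' y) * w2 (xsup x' y)" using Suc.IH x'c by blast
      define \<zeta> where "\<zeta> = xsup x' y"
      have \<zeta>c: "\<zeta> \<in> cfgs D" unfolding \<zeta>_def by (rule cfgs_sup[OF x'c y])
      have inf_eq: "xinf x' y = xinf x y" using e by (auto simp: xinf_def x'_def fun_eq_iff)
      have le: "\<forall>e'. x' e' \<longrightarrow> \<zeta> e'" by (simp add: \<zeta>_def xsup_def)
      have \<zeta>e: "\<not> \<zeta> e" using e by (simp add: \<zeta>_def xsup_def x'_def)
      have cr: "w1 (x'(e := True)) * w2 \<zeta> \<le> w1 x' * w2 (\<zeta>(e := True))"
        using cross x'c \<zeta>c e(1) le \<zeta>e by blast
      have x1: "x'(e := True) = x" using e by (auto simp: x'_def fun_eq_iff)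
      have z1: "\<zeta>(e := True) = xsup x y" using e by (auto simp: \<zeta>_def x'_def xsup_def fun_eq_iff)
      have cr': "w1 x * w2 \<zeta> \<le> w1 x' * w2 (xsup x y)" using cr unfolding x1 z1 .
      have IH': "w1 x' * w2 y \<le> w1 (xinf x y) * w2 \<zeta>" using IH unfolding inf_eq \<zeta>_def .
      have P: "0 \<le> w1 x" and R: "0 < w1 x'" and I: "0 \<le> w1 (xinf x y)"
        using pos x x'c cfgs_inf[OF x y] by (auto intro: less_imp_le)
      have "w1 x' * (w1 x * w2 y) = w1 x * (w1 x' * w2 y)" by (simp add: mult_ac)
      also have "\<dots> \<le> w1 x * (w1 (xinf x y) * w2 \<zeta>)" by (rule mult_left_mono[OF IH' P])
      also have "\<dots> = w1 (xinf x y) * (w1 x * w2 \<zeta>)" by (simp add: mult_ac)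
      also have "\<dots> \<le> w1 (xinf x y) * (w1 x' * w2 (xsup x y))" by (rule mult_left_mono[OF cr' I])
      also have "\<dots> = w1 x' * (w1 (xinf x y) * w2 (xsup x y))" by (simp add: mult_ac)
      finally show "w1 x * w2 y \<le> w1 (xinf x y) * w2 (xsup x y)"
        using R by (simp add: mult_le_cancel_left_pos)
    qed
  qed
  show ?thesis using main by (simp add: mult.commute)
qed

lemma holley_cross:
  fixes w1 w2 :: "('e \<Rightarrow> bool) \<Rightarrow> real"
  assumes D: "finite D" and pos: "\<forall>x\<in>cfgs D. 0 < w1 x \<and> 0 < w2 x"
    and cross: "\<forall>x\<in>cfgs D. \<forall>y\<in>cfgs D. \<forall>e\<in>D. (\<forall>e'. x e' \<longrightarrow> y e') \<longrightarrow> \<not> y e \<longrightarrow>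
        w1 (x(e := True)) * w2 y \<le> w1 x * w2 (y(e := True))"
  shows "dominated D (\<lambda>A. sum w1 (A \<inter> cfgs D) / sum w1 (cfgs D)) (\<lambda>A. sum w2 (A \<inter> cfgs D) / sum w2 (cfgs D))"
  unfolding dominated_def
proof (intro allI impI)
  fix A assume A: "increasing_event D A"
  have fin: "finite (cfgs D)" by (rule cfgs_finite[OF D])
  have ne: "(\<lambda>_. False) \<in> cfgs D" by (simp add: cfgs_def)
  have Z1: "sum w1 (cfgs D) > 0" by (rule sum_pos2[OF fin ne]) (use pos ne in auto)
  have Z2: "sum w2 (cfgs D) > 0" by (rule sum_pos2[OF fin ne]) (use pos ne in auto)
  show "sum w1 (A \<inter> cfgs D) / sum w1 (cfgs D) \<le> sum w2 (A \<inter> cfgs D) / sum w2 (cfgs D)"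
  proof (rule holley_lattice[OF D _ Z1 Z2 _ A])
    show "\<forall>x\<in>cfgs D. 0 \<le> w1 x \<and> 0 \<le> w2 x" using pos by (auto intro: less_imp_le)
    show "\<forall>x\<in>cfgs D. \<forall>y\<in>cfgs D. w1 x * w2 y \<le> w2 (xsup x y) * w1 (xinf x y)"
      using lattice_from_cross[OF D pos cross] by blast
  qed
qed



lemma cond_pos: "q \<ge> 1 \<Longrightarrow> cond q b > 0"
  by (simp add: cond_def)

lemma cond_mono: "q \<ge> 1 \<Longrightarrow> (a \<longrightarrow> b) \<Longrightarrow> cond q a \<le> cond q b"
  by (auto simp: cond_def)

lemma det_lap_pos:
  assumes conn: "connected_mg V E ends" and cpos: "\<And>e. e \<in> E \<Longrightarrow> c e > 0"
  shows "det_lap V E ends c > 0"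
proof -
  have "det_on V (lapM V E ends c) > 0"
  proof (rule det_on_pos)
    show "finite V" using conn by (auto simp: connected_mg_def multigraph_def)
    show "\<forall>x\<in>V. \<forall>y\<in>V. lapM V E ends c x y = lapM V E ends c y x" by (intro ballI) (rule lapM_sym)
    show "\<forall>v. (\<exists>x\<in>V. v x \<noteq> 0) \<longrightarrow> 0 < qform V (lapM V E ends c) v"
      by (intro allI impI, rule lapM_pd[OF conn]) (use cpos in auto)
  qed
  thus ?thesis unfolding det_lap_eq .
qed

lemma weight_pos:
  assumes conn: "connected_mg V E ends" and q: "q \<ge> 1" and p: "0 < p" "p < 1"
  shows "weight p q V E ends D bc \<kappa> > 0"
proof -
  have "det_lap V E ends (\<lambda>e. cond q (glue D bc \<kappa> e)) > 0"
    by (rule det_lap_pos[OF conn]) (rule cond_pos[OF q])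
  thus ?thesis unfolding weight_def using p by simp
qed

lemma weight_step:
  assumes conn: "connected_mg V E ends" and q: "q \<ge> 1" and p: "0 < p" "p < 1"
    and D: "D \<subseteq> E" and x: "x \<in> cfgs D" and e: "e \<in> D" and xe: "\<not> x e"
  shows "\<exists>R\<ge>0. weight p q V E ends D bc (x(e := True)) * (1 - p) =
      weight p q V E ends D bc x * p * (1 + (q - 1) * R) powr (-1/2) \<and>
      (\<forall>f. 2 * dif ends f e - energy E ends (\<lambda>e'. cond q (glue D bc x e')) f \<le> R) \<and>
      (\<exists>f. 2 * dif ends f e - energy E ends (\<lambda>e'. cond q (glue D bc x e')) f = R)"
proof -
  have E: "finite E" using conn by (auto simp: connected_mg_def multigraph_def)
  have fD: "finite D" using D E by (rule finite_subset)
  define c where "c = (\<lambda>e'. cond q (glue D bc x e'))"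
  have ce: "c e = 1" using e xe by (simp add: c_def glue_def cond_def)
  have c': "(\<lambda>e'. cond q (glue D bc (x(e := True)) e')) = c(e := c e + (q - 1))"
    using e ce by (auto simp: c_def glue_def cond_def fun_eq_iff)
  have eE: "e \<in> E" using e D by blast
  have G: "det_lap V E ends c > 0 \<and>
    (\<exists>R\<ge>0. (\<forall>t. det_lap V E ends (c(e := c e + t)) = det_lap V E ends c * (1 + t * R)) \<and>
       (\<forall>f. 2 * dif ends f e - energy E ends c f \<le> R) \<and>
       (\<exists>f. 2 * dif ends f e - energy E ends c f = R))"
    by (rule graph_main[OF conn _ eE]) (simp add: c_def cond_pos[OF q])
  then obtain R where R0: "R \<ge> 0" and det0: "\<forall>t. det_lap V E ends (c(e := c e + t)) = det_lap V E ends c * (1 + t * R)"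
    and var: "\<forall>f. 2 * dif ends f e - energy E ends c f \<le> R" and att: "\<exists>f. 2 * dif ends f e - energy E ends c f = R"
    by blast
  have det: "det_lap V E ends (c(e := c e + t)) = det_lap V E ends c * (1 + t * R)" for t
    using det0 by blast
  have h: "hcount D (x(e := True)) = Suc (hcount D x)"
  proof -
    have "{e'\<in>D. (x(e := True)) e'} = insert e {e'\<in>D. x e'}" using e by auto
    moreover have "e \<notin> {e'\<in>D. x e'}" using xe by simp
    ultimately show ?thesis unfolding hcount_def using fD by simp
  qed
  obtain s' where s: "scount D x = Suc s'" and s': "scount D (x(e := True)) = s'"
  proof -
    have S: "{e'\<in>D. \<not> (x(e := True)) e'} = {e'\<in>D. \<not> x e'} - {e}" by auto
    have "e \<in> {e'\<in>D. \<not> x e'}" using e xe by simp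
    hence "card {e'\<in>D. \<not> x e'} > 0" using fD by (auto simp: card_gt_0_iff)
    then obtain k where k: "card {e'\<in>D. \<not> x e'} = Suc k" using gr0_conv_Suc by blast
    have "card {e'\<in>D. \<not> (x(e := True)) e'} = k"
      unfolding S using \<open>e \<in> {e'\<in>D. \<not> x e'}\<close> fD k by simp
    thus ?thesis using that k unfolding scount_def by blast
  qed
  define K where "K = (1 + (q - 1) * R) powr (-1/2)"
  define d where "d = det_lap V E ends c"
  have "weight p q V E ends D bc (x(e := True)) * (1 - p) =
     p ^ Suc (hcount D x) * (1 - p) ^ s' * (d * (1 + (q - 1) * R)) powr (-1/2) * (1 - p)"
    unfolding weight_def h s' c' det d_def ..
  also have "\<dots> = (p ^ hcount D x * (1 - p) ^ Suc s' * d powr (-1/2)) * p * K"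
    unfolding K_def powr_mult by (simp add: mult_ac)
  also have "p ^ hcount D x * (1 - p) ^ Suc s' * d powr (-1/2) = weight p q V E ends D bc x"
    unfolding weight_def s d_def c_def ..
  finally show ?thesis using R0 var att unfolding K_def c_def by blast
qed

lemma Pbc_fun: "Pbc p q V E ends D bc = (\<lambda>A. sum (weight p q V E ends D bc) (A \<inter> cfgs D) / sum (weight p q V E ends D bc) (cfgs D))"
  by (simp add: Pbc_def fun_eq_iff)

lemma compare:
  fixes ends1 :: "'e \<Rightarrow> 'v1 \<times> 'v1" and ends2 :: "'e \<Rightarrow> 'v2 \<times> 'v2"
  assumes conn1: "connected_mg V1 E1 ends1" and conn2: "connected_mg V2 E2 ends2"
    and D1: "D \<subseteq> E1" and D2: "D \<subseteq> E2" and q: "q \<ge> 1" and p: "0 < p" "p < 1"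
    and dom: "\<And>x y f2. x \<in> cfgs D \<Longrightarrow> y \<in> cfgs D \<Longrightarrow> (\<forall>e. x e \<longrightarrow> y e) \<Longrightarrow>
       \<exists>f1. (\<forall>e\<in>D. dif ends1 f1 e = dif ends2 f2 e) \<and>
         energy E1 ends1 (\<lambda>e. cond q (glue D bc1 x e)) f1 \<le> energy E2 ends2 (\<lambda>e. cond q (glue D bc2 y e)) f2"
  shows "dominated D (Pbc p q V1 E1 ends1 D bc1) (Pbc p q V2 E2 ends2 D bc2)"
  unfolding Pbc_fun
proof (rule holley_cross)
  have E1: "finite E1" using conn1 by (auto simp: connected_mg_def multigraph_def)
  show fD: "finite D" using D1 E1 by (rule finite_subset)
  let ?w1 = "weight p q V1 E1 ends1 D bc1" and ?w2 = "weight p q V2 E2 ends2 D bc2"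
  show "\<forall>x\<in>cfgs D. 0 < ?w1 x \<and> 0 < ?w2 x"
    using weight_pos[OF conn1 q p] weight_pos[OF conn2 q p] by blast
  show "\<forall>x\<in>cfgs D. \<forall>y\<in>cfgs D. \<forall>e\<in>D. (\<forall>e'. x e' \<longrightarrow> y e') \<longrightarrow> \<not> y e \<longrightarrow>
        ?w1 (x(e := True)) * ?w2 y \<le> ?w1 x * ?w2 (y(e := True))"
  proof (intro ballI impI)
    fix x y e assume x: "x \<in> cfgs D" and y: "y \<in> cfgs D" and e: "e \<in> D"
      and le: "\<forall>e'. x e' \<longrightarrow> y e'" and ye: "\<not> y e"
    have xe: "\<not> x e" using le ye by blast
    obtain R1 where R1: "R1 \<ge> 0" and w1: "?w1 (x(e := True)) * (1 - p) = ?w1 x * p * (1 + (q - 1) * R1) powr (-1/2)"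
      and var1: "\<forall>f. 2 * dif ends1 f e - energy E1 ends1 (\<lambda>e'. cond q (glue D bc1 x e')) f \<le> R1"
      using weight_step[OF conn1 q p D1 x e xe, of bc1] by blast
    obtain R2 where R2: "R2 \<ge> 0" and w2: "?w2 (y(e := True)) * (1 - p) = ?w2 y * p * (1 + (q - 1) * R2) powr (-1/2)"
      and att2: "\<exists>f. 2 * dif ends2 f e - energy E2 ends2 (\<lambda>e'. cond q (glue D bc2 y e')) f = R2"
      using weight_step[OF conn2 q p D2 y e ye, of bc2] by blast
    obtain f2 where f2: "2 * dif ends2 f2 e - energy E2 ends2 (\<lambda>e'. cond q (glue D bc2 y e')) f2 = R2"
      using att2 by blast
    obtain f1 where f1d: "\<forall>e\<in>D. dif ends1 f1 e = dif ends2 f2 e"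
      and f1e: "energy E1 ends1 (\<lambda>e. cond q (glue D bc1 x e)) f1 \<le> energy E2 ends2 (\<lambda>e. cond q (glue D bc2 y e)) f2"
      using dom[OF x y le] by blast
    have "R2 \<le> R1" using var1[rule_format, of f1] f1d e f1e f2 by simp
    hence mono: "1 + (q - 1) * R2 \<le> 1 + (q - 1) * R1" using q by (simp add: mult_left_mono)
    have pos2: "0 < 1 + (q - 1) * R2" using q R2 by (simp add: add_pos_nonneg)
    have K: "(1 + (q - 1) * R1) powr (-1/2) \<le> (1 + (q - 1) * R2) powr (-1/2)"
      by (rule powr_mono2'[OF _ pos2 mono]) simp
    have wx: "?w1 x > 0" and wy: "?w2 y > 0"
      using weight_pos[OF conn1 q p] weight_pos[OF conn2 q p] by blast+
    have p1: "1 - p > 0" using p by simp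
    have "(?w1 (x(e := True)) * ?w2 y) * (1 - p) = ?w1 x * ?w2 y * p * (1 + (q - 1) * R1) powr (-1/2)"
      using w1 by (simp add: mult_ac)
    also have "\<dots> \<le> ?w1 x * ?w2 y * p * (1 + (q - 1) * R2) powr (-1/2)"
      by (rule mult_left_mono[OF K]) (use wx wy p in simp)
    also have "\<dots> = (?w1 x * ?w2 (y(e := True))) * (1 - p)"
      using w2 by (simp add: mult_ac)
    finally show "?w1 (x(e := True)) * ?w2 y \<le> ?w1 x * ?w2 (y(e := True))"
      using p1 by simp
  qed
qed



lemma det_lap_cong:
  assumes "\<And>e. e \<in> E \<Longrightarrow> c e = c' e"
  shows "det_lap V E ends c = det_lap V E ends c'"
proof -
  have "laplacian E ends c g x = laplacian E ends c' g x" for g x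
    unfolding laplacian_def using assms by (intro sum.cong refl) simp
  thus ?thesis unfolding det_lap_def by simp
qed

lemma Pbc_full_bc: "Pbc p q V E ends E bc = Pbc p q V E ends E bc'"
proof -
  have "weight p q V E ends E bc = weight p q V E ends E bc'"
  proof
    fix \<kappa>
    have "det_lap V E ends (\<lambda>e. cond q (glue E bc \<kappa> e)) = det_lap V E ends (\<lambda>e. cond q (glue E bc' \<kappa> e))"
      by (rule det_lap_cong) (simp add: glue_def)
    thus "weight p q V E ends E bc \<kappa> = weight p q V E ends E bc' \<kappa>" unfolding weight_def by simp
  qed
  thus ?thesis unfolding Pbc_fun by simp
qed

lemma energy_mono:
  assumes "finite E2" "E1 \<subseteq> E2" "\<And>e. e \<in> E1 \<Longrightarrow> c1 e \<le> c2 e" "\<And>e. e \<in> E2 \<Longrightarrow> 0 \<le> c2 e"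
  shows "energy E1 ends c1 f \<le> energy E2 ends c2 f"
proof -
  have "energy E1 ends c1 f \<le> energy E1 ends c2 f"
    unfolding energy_def by (intro sum_mono mult_right_mono) (use assms in auto)
  also have "\<dots> \<le> energy E2 ends c2 f"
    unfolding energy_def by (intro sum_mono2) (use assms in auto)
  finally show ?thesis .
qed

lemma glue_mono:
  assumes "q \<ge> 1" "\<forall>e. x e \<longrightarrow> y e" "e \<notin> D \<Longrightarrow> bc e \<Longrightarrow> bc' e"
  shows "cond q (glue D bc x e) \<le> cond q (glue D bc' y e)"
  using assms by (auto simp: glue_def cond_def)

lemma adj_sym: "adj F ends a b \<Longrightarrow> adj F ends b a"
  unfolding adj_def by auto

lemma cls_eq_adj:
  assumes "adj F ends a b"
  shows "contr_class V F ends a = contr_class V F ends b"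
proof -
  have ab: "(adj F ends)\<^sup>*\<^sup>* a y" if "(adj F ends)\<^sup>*\<^sup>* b y" for y
    using converse_rtranclp_into_rtranclp[OF assms that] .
  have ba: "(adj F ends)\<^sup>*\<^sup>* b y" if "(adj F ends)\<^sup>*\<^sup>* a y" for y
    using converse_rtranclp_into_rtranclp[OF adj_sym[OF assms] that] .
  show ?thesis unfolding contr_class_def using ab ba by blast
qed

lemma cls_eq_edge:
  assumes "e \<in> F"
  shows "contr_class V F ends (fst (ends e)) = contr_class V F ends (snd (ends e))"
  by (rule cls_eq_adj) (use assms in \<open>auto simp: adj_def\<close>)

lemma contr_connected:
  assumes conn: "connected_mg V E ends" and F: "F \<subseteq> E"
  shows "connected_mg (contr_V V F ends) (contr_E E F) (contr_ends V F ends)"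
proof -
  have mg: "multigraph V E ends" and Vne: "V \<noteq> {}" and path: "\<forall>x\<in>V. \<forall>y\<in>V. (adj E ends)\<^sup>*\<^sup>* x y"
    using conn by (auto simp: connected_mg_def)
  let ?cls = "contr_class V F ends"
  have mg': "multigraph (contr_V V F ends) (contr_E E F) (contr_ends V F ends)"
    using mg unfolding multigraph_def contr_V_def contr_E_def contr_ends_def by auto
  have step: "(adj (contr_E E F) (contr_ends V F ends))\<^sup>*\<^sup>* (?cls x) (?cls z)"
    if "(adj E ends)\<^sup>*\<^sup>* x z" for x z
    using that
  proof (induction rule: rtranclp_induct)
    case base then show ?case by simp
  next
    case (step y z)
    from step.hyps(2) obtain e where e: "e \<in> E" "ends e = (y, z) \<or> ends e = (z, y)"
      unfolding adj_def by blast
    show ?case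
    proof (cases "e \<in> F")
      case True
      have "?cls y = ?cls z" using cls_eq_edge[OF True, of V ends] e(2) by auto
      then show ?thesis using step.IH by simp
    next
      case False
      have "adj (contr_E E F) (contr_ends V F ends) (?cls y) (?cls z)"
        unfolding adj_def contr_E_def contr_ends_def using e False by (intro bexI[of _ e]) auto
      then show ?thesis by (rule rtranclp.rtrancl_into_rtrancl[OF step.IH])
    qed
  qed
  have "\<forall>X\<in>contr_V V F ends. \<forall>Y\<in>contr_V V F ends. (adj (contr_E E F) (contr_ends V F ends))\<^sup>*\<^sup>* X Y"
    unfolding contr_V_def using path step by blast
  moreover have "contr_V V F ends \<noteq> {}" using Vne unfolding contr_V_def by simp
  ultimately show ?thesis using mg' unfolding connected_mg_def by blast
qed

theorem corollary4p9:
  fixes V V' :: "'v set" and E E' F :: "'e set" and ends :: "'e \<Rightarrow> 'v \<times> 'v"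
    and p q :: real and lam1 lam2 :: "'e \<Rightarrow> bool"
  assumes G: "connected_mg V E ends" "simple_graph V E ends"
    and G': "subgraph V' E' V E ends" "connected_mg V' E' ends"
    and F: "F \<subseteq> E"
    and q: "q \<ge> 1" and p: "0 < p" "p < 1"
    and le: "\<forall>e\<in>E. lam1 e \<longrightarrow> lam2 e"
  shows "dominated E' (Pfree p q V' E' ends) (Pbc p q V E ends E' lam1)
       \<and> dominated E' (Pbc p q V E ends E' lam1) (Pbc p q V E ends E' lam2)
       \<and> dominated (E - F) (Pbc p q V E ends (E - F) lam2)
            (Pfree p q (contr_V V F ends) (contr_E E F) (contr_ends V F ends))
       \<and> (\<forall>lam E''. E'' \<subseteq> E' \<longrightarrow>
            dominated E'' (Pbc p q V' E' ends E'' lam) (Pbc p q V E ends E'' lam))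
       \<and> (\<forall>lam E''. E'' \<subseteq> E \<and> E'' \<inter> F = {} \<longrightarrow>
            dominated E'' (Pbc p q V E ends E'' lam)
              (Pbc p q (contr_V V F ends) (contr_E E F) (contr_ends V F ends) E'' lam))"
proof -
  have EE: "E' \<subseteq> E" using G'(1) by (simp add: subgraph_def)
  have finE: "finite E" using G(1) by (auto simp: connected_mg_def multigraph_def)
  have cnn: "\<And>b. 0 \<le> cond q b" using cond_pos[OF q] less_imp_le by blast
  have C4: "dominated E'' (Pbc p q V' E' ends E'' lam) (Pbc p q V E ends E'' lam)" if E'': "E'' \<subseteq> E'" for lam E''
  proof (rule compare[OF G'(2) G(1) E'' _ q p])
    show "E'' \<subseteq> E" using E'' EE by blast
    fix x y and f2 :: "'v \<Rightarrow> real" assume x: "x \<in> cfgs E''" and y: "y \<in> cfgs E''" and xy: "\<forall>e. x e \<longrightarrow> y e"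
    have "energy E' ends (\<lambda>e. cond q (glue E'' lam x e)) f2 \<le> energy E ends (\<lambda>e. cond q (glue E'' lam y e)) f2"
      by (rule energy_mono[OF finE EE]) (use glue_mono[OF q xy] cnn in auto)
    thus "\<exists>f1. (\<forall>e\<in>E''. dif ends f1 e = dif ends f2 e) \<and>
       energy E' ends (\<lambda>e. cond q (glue E'' lam x e)) f1 \<le> energy E ends (\<lambda>e. cond q (glue E'' lam y e)) f2"
      by blast
  qed
  have C2: "dominated E' (Pbc p q V E ends E' lam1) (Pbc p q V E ends E' lam2)"
  proof (rule compare[OF G(1) G(1) EE EE q p])
    fix x y and f2 :: "'v \<Rightarrow> real" assume x: "x \<in> cfgs E'" and y: "y \<in> cfgs E'" and xy: "\<forall>e. x e \<longrightarrow> y e"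
    have "energy E ends (\<lambda>e. cond q (glue E' lam1 x e)) f2 \<le> energy E ends (\<lambda>e. cond q (glue E' lam2 y e)) f2"
      by (rule energy_mono[OF finE order.refl]) (use glue_mono[OF q xy] le cnn in auto)
    thus "\<exists>f1. (\<forall>e\<in>E'. dif ends f1 e = dif ends f2 e) \<and>
       energy E ends (\<lambda>e. cond q (glue E' lam1 x e)) f1 \<le> energy E ends (\<lambda>e. cond q (glue E' lam2 y e)) f2"
      by blast
  qed
  let ?cV = "contr_V V F ends" and ?cE = "contr_E E F" and ?ce = "contr_ends V F ends"
  let ?cls = "contr_class V F ends"
  have Gc: "connected_mg ?cV ?cE ?ce" by (rule contr_connected[OF G(1) F])
  have C5: "dominated E'' (Pbc p q V E ends E'' lam) (Pbc p q ?cV ?cE ?ce E'' lam)"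
    if E'': "E'' \<subseteq> E" "E'' \<inter> F = {}" for lam E''
  proof (rule compare[OF G(1) Gc E''(1) _ q p])
    show "E'' \<subseteq> ?cE" using E'' by (auto simp: contr_E_def)
    fix x y and f2 :: "'v set \<Rightarrow> real" assume x: "x \<in> cfgs E''" and y: "y \<in> cfgs E''" and xy: "\<forall>e. x e \<longrightarrow> y e"
    define f1 where "f1 = (\<lambda>v. f2 (?cls v))"
    have d: "dif ends f1 e = dif ?ce f2 e" for e
      unfolding f1_def dif_def contr_ends_def by simp
    have dF: "dif ends f1 e = 0" if "e \<in> F" for e
      unfolding f1_def dif_def using cls_eq_edge[OF that, of V ends] by simp
    let ?c1 = "\<lambda>e. cond q (glue E'' lam x e)" and ?c2 = "\<lambda>e. cond q (glue E'' lam y e)"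
    have "energy E ends ?c1 f1 = (\<Sum>e\<in>E - F. ?c1 e * (dif ends f1 e)^2) + (\<Sum>e\<in>F. ?c1 e * (dif ends f1 e)^2)"
      unfolding energy_def by (rule sum.subset_diff[OF F finE])
    also have "(\<Sum>e\<in>F. ?c1 e * (dif ends f1 e)^2) = 0" using dF by simp
    also have "(\<Sum>e\<in>E - F. ?c1 e * (dif ends f1 e)^2) \<le> (\<Sum>e\<in>E - F. ?c2 e * (dif ?ce f2 e)^2)"
      unfolding d by (intro sum_mono mult_right_mono) (use glue_mono[OF q xy] in auto)
    also have "\<dots> = energy ?cE ?ce ?c2 f2" unfolding energy_def contr_E_def ..
    finally have "energy E ends ?c1 f1 \<le> energy ?cE ?ce ?c2 f2" by simp
    thus "\<exists>f1. (\<forall>e\<in>E''. dif ends f1 e = dif ?ce f2 e) \<and> energy E ends ?c1 f1 \<le> energy ?cE ?ce ?c2 f2"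
      using d by blast
  qed
  have C1: "dominated E' (Pfree p q V' E' ends) (Pbc p q V E ends E' lam1)"
  proof -
    have "Pfree p q V' E' ends = Pbc p q V' E' ends E' lam1"
      unfolding Pfree_def by (rule Pbc_full_bc)
    thus ?thesis using C4[OF order.refl, of lam1] by simp
  qed
  have C3: "dominated (E - F) (Pbc p q V E ends (E - F) lam2) (Pfree p q ?cV ?cE ?ce)"
  proof -
    have e1: "Pfree p q ?cV ?cE ?ce = Pbc p q ?cV ?cE ?ce ?cE lam2"
      unfolding Pfree_def by (rule Pbc_full_bc)
    have e2: "?cE = E - F" by (simp add: contr_E_def)
    have eq: "Pfree p q ?cV ?cE ?ce = Pbc p q ?cV ?cE ?ce (E - F) lam2"
      using e1 unfolding e2[symmetric] by simp
    show ?thesis unfolding eq by (rule C5) auto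
  qed
  show ?thesis using C1 C2 C3 C4 C5 by blast
qed

end
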